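(* Let $G$ be a group and $\mathcal{F}$ a family of finite subgroups of $G$. The orbit category $\mathrm{Or}(G,\mathcal{F})$ satisfies the unique factorisation property if and only if every member of $\mathcal{F}$ is a cyclic group of prime power order (different primes may occur for different members).
   Context: A family of subgroups is a non-empty set of subgroups closed under conjugation and passing to subgroups. $\mathrm{Or}(G,\mathcal{F})$ has objects $G/H$, $H\in\mathcal{F}$, and morphisms all $G$-equivariant maps; each morphism $G/H\to G/K$ is $\phi(g)\colon xH\mapsto xg^{-1}K$ for some $g$ with $gHg^{-1}\subseteq K$, unique modulo left multiplication by $K$. A morphism is unfactorisable if it is not an isomorphism and whenever $f=gh$ one of $g,h$ is an isomorphism. A category satisfies the unique factorisation property if for any two chains $x=x_0\xrightarrow{\alpha_1}\cdots\xrightarrow{\alpha_n}x_n=y$ and $x=x'_0\xrightarrow{\alpha'_1}\cdots\xrightarrow{\alpha'_{n'}}x'_{n'}=y$ of unfactorisable morphisms with equal composites, $n=n'$ and there are isomorphisms $h_i\colon x_i\to x'_i$ ($1\le i\le n-1$) with $h_1\alpha_1=\alpha'_1$, $\alpha'_nh_{n-1}=\alpha_n$ and $\alpha'_ih_{i-1}=h_i\alpha_i$ for $2\le i\le n-1$. *)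

theory Defs
  imports "HOL-Algebra.Algebra" "HOL-Computational_Algebra.Primes"
begin

definition subgroup_family :: "('g, 'b) monoid_scheme \<Rightarrow> 'g set set \<Rightarrow> bool" where
  "subgroup_family G F \<longleftrightarrow>
     F \<noteq> {} \<and> (\<forall>H\<in>F. subgroup H G) \<and>
     (\<forall>H\<in>F. \<forall>g\<in>carrier G. (g <#\<^bsub>G\<^esub> H) #>\<^bsub>G\<^esub> inv\<^bsub>G\<^esub> g \<in> F) \<and>
     (\<forall>H\<in>F. \<forall>K. subgroup K G \<and> K \<subseteq> H \<longrightarrow> K \<in> F)"

definition coset_space :: "('g, 'b) monoid_scheme \<Rightarrow> 'g set \<Rightarrow> 'g set set" where
  "coset_space G H = {x <#\<^bsub>G\<^esub> H | x. x \<in> carrier G}"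

definition orb_hom :: "('g, 'b) monoid_scheme \<Rightarrow> 'g set \<Rightarrow> 'g set \<Rightarrow> ('g set \<Rightarrow> 'g set) \<Rightarrow> bool" where
  "orb_hom G H K f \<longleftrightarrow>
     f \<in> coset_space G H \<rightarrow> coset_space G K \<and> f \<in> extensional (coset_space G H) \<and>
     (\<forall>g\<in>carrier G. \<forall>C\<in>coset_space G H. f (g <#\<^bsub>G\<^esub> C) = g <#\<^bsub>G\<^esub> f C)"

definition orb_id :: "('g, 'b) monoid_scheme \<Rightarrow> 'g set \<Rightarrow> ('g set \<Rightarrow> 'g set)" where
  "orb_id G H = (\<lambda>C\<in>coset_space G H. C)"

definition orb_comp :: "('g, 'b) monoid_scheme \<Rightarrow> 'g set \<Rightarrow> ('g set \<Rightarrow> 'g set) \<Rightarrow> ('g set \<Rightarrow> 'g set) \<Rightarrow> ('g set \<Rightarrow> 'g set)" where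
  "orb_comp G H g f = compose (coset_space G H) g f"

definition orb_iso :: "('g, 'b) monoid_scheme \<Rightarrow> 'g set \<Rightarrow> 'g set \<Rightarrow> ('g set \<Rightarrow> 'g set) \<Rightarrow> bool" where
  "orb_iso G H K f \<longleftrightarrow> orb_hom G H K f \<and>
     (\<exists>f'. orb_hom G K H f' \<and> orb_comp G H f' f = orb_id G H \<and> orb_comp G K f f' = orb_id G K)"

definition orb_unfactorisable :: "('g, 'b) monoid_scheme \<Rightarrow> 'g set set \<Rightarrow> 'g set \<Rightarrow> 'g set \<Rightarrow> ('g set \<Rightarrow> 'g set) \<Rightarrow> bool" where
  "orb_unfactorisable G F H K f \<longleftrightarrow> orb_hom G H K f \<and> \<not> orb_iso G H K f \<and>
     (\<forall>L\<in>F. \<forall>h g. orb_hom G H L h \<and> orb_hom G L K g \<and> orb_comp G H g h = f \<longrightarrow>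
        orb_iso G H L h \<or> orb_iso G L K g)"

text \<open>A chain x = x_0 \<rightarrow> x_1 \<rightarrow> ... \<rightarrow> x_n = y of unfactorisable morphisms:
  objs = [x_0,...,x_n], ms = [\<alpha>_1,...,\<alpha>_n], with \<alpha>_(i+1) = ms!i : objs!i \<rightarrow> objs!(i+1).\<close>
definition orb_chain :: "('g, 'b) monoid_scheme \<Rightarrow> 'g set set \<Rightarrow> 'g set \<Rightarrow> 'g set \<Rightarrow> 'g set list \<Rightarrow> ('g set \<Rightarrow> 'g set) list \<Rightarrow> bool" where
  "orb_chain G F x y objs ms \<longleftrightarrow>
     length objs = Suc (length ms) \<and> objs ! 0 = x \<and> objs ! length ms = y \<and>
     set objs \<subseteq> F \<and>
     (\<forall>i<length ms. orb_unfactorisable G F (objs ! i) (objs ! Suc i) (ms ! i))"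

definition orb_chain_comp :: "('g, 'b) monoid_scheme \<Rightarrow> 'g set \<Rightarrow> ('g set \<Rightarrow> 'g set) list \<Rightarrow> ('g set \<Rightarrow> 'g set)" where
  "orb_chain_comp G x ms = restrict (foldl (\<lambda>acc m. m \<circ> acc) id ms) (coset_space G x)"

text \<open>Isomorphisms h_i : x_i \<rightarrow> x'_i are indexed
  0..n with h_0 = id_x and h_n = id_y, and required to satisfy \<alpha>'_i h_(i-1) = h_i \<alpha>_i
  for 1 \<le> i \<le> n (this packages the three conditions of the definition).\<close>
definition orbit_category_ufp :: "('g, 'b) monoid_scheme \<Rightarrow> 'g set set \<Rightarrow> bool" where
  "orbit_category_ufp G F \<longleftrightarrow>
     (\<forall>x\<in>F. \<forall>y\<in>F. \<forall>objs ms objs' ms'.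
        orb_chain G F x y objs ms \<and> orb_chain G F x y objs' ms' \<and>
        orb_chain_comp G x ms = orb_chain_comp G x ms' \<longrightarrow>
        length ms = length ms' \<and>
        (\<exists>hs. length hs = length objs \<and>
              hs ! 0 = orb_id G x \<and> hs ! length ms = orb_id G y \<and>
              (\<forall>i\<le>length ms. orb_iso G (objs ! i) (objs' ! i) (hs ! i)) \<and>
              (\<forall>i<length ms. orb_comp G (objs ! i) (ms' ! i) (hs ! i) =
                             orb_comp G (objs ! i) (hs ! Suc i) (ms ! i))))"

end

theory Submission
  imports Defs
begin

definition cj :: "('g,'b) monoid_scheme \<Rightarrow> 'g \<Rightarrow> 'g set \<Rightarrow> 'g set" where
  "cj G g A = {g \<otimes>\<^bsub>G\<^esub> a \<otimes>\<^bsub>G\<^esub> inv\<^bsub>G\<^esub> g | a. a \<in> A}"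

definition mkhom :: "('g,'b) monoid_scheme \<Rightarrow> 'g set \<Rightarrow> 'g set \<Rightarrow> 'g \<Rightarrow> ('g set \<Rightarrow> 'g set)" where
  "mkhom G H K g = (\<lambda>C\<in>coset_space G H. \<Union>c\<in>C. (c \<otimes>\<^bsub>G\<^esub> inv\<^bsub>G\<^esub> g) <#\<^bsub>G\<^esub> K)"

definition maxsub :: "('g,'b) monoid_scheme \<Rightarrow> 'g set \<Rightarrow> 'g set \<Rightarrow> bool" where
  "maxsub G M K \<longleftrightarrow> subgroup M G \<and> subgroup K G \<and> M \<subseteq> K \<and> M \<noteq> K \<and>
     (\<forall>L. subgroup L G \<and> M \<subseteq> L \<and> L \<subseteq> K \<longrightarrow> L = M \<or> L = K)"

context group begin

lemma inv_cancel_l [simp]: "g \<in> carrier G \<Longrightarrow> z \<in> carrier G \<Longrightarrow> inv g \<otimes> (g \<otimes> z) = z"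
  by (simp add: m_assoc[symmetric])
lemma inv_cancel_l2 [simp]: "g \<in> carrier G \<Longrightarrow> z \<in> carrier G \<Longrightarrow> g \<otimes> (inv g \<otimes> z) = z"
  by (simp add: m_assoc[symmetric])

lemma lcos_eq_iff:
  assumes K: "subgroup K G" and a: "a \<in> carrier G" and b: "b \<in> carrier G"
  shows "a <# K = b <# K \<longleftrightarrow> inv a \<otimes> b \<in> K"
proof
  assume h: "a <# K = b <# K"
  have "b \<otimes> \<one> \<in> b <# K" unfolding l_coset_def
    using subgroup.one_closed[OF K] by (rule UN_I) simp
  then have "b \<in> a <# K" using b h by simp
  then obtain k where k: "k \<in> K" "b = a \<otimes> k" unfolding l_coset_def by auto
  have kc: "k \<in> carrier G" using subgroup.mem_carrier[OF K k(1)] .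
  have "inv a \<otimes> b = k" using a kc k(2) by simp
  then show "inv a \<otimes> b \<in> K" using k(1) by simp
next
  assume h: "inv a \<otimes> b \<in> K"
  have "b = a \<otimes> (inv a \<otimes> b)" using a b by simp
  then have "b \<in> a <# K" unfolding l_coset_def using h by (rule_tac UN_I) auto
  then show "a <# K = b <# K" using l_repr_independence[OF _ a K] by simp
qed

lemma lcos_self: "subgroup K G \<Longrightarrow> k \<in> K \<Longrightarrow> k <# K = K"
proof -
  assume K: "subgroup K G" and k: "k \<in> K"
  have kc: "k \<in> carrier G" using subgroup.mem_carrier[OF K k] .
  have "inv k \<otimes> \<one> \<in> K" using subgroup.m_inv_closed[OF K k] kc by simp
  then have "k <# K = \<one> <# K" using lcos_eq_iff[OF K kc one_closed] by simp
  then show ?thesis using lcos_mult_one[OF subgroup.subset[OF K]] by simp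
qed

lemma one_lcos: "subgroup K G \<Longrightarrow> \<one> <# K = K"
  by (simp add: lcos_mult_one subgroup.subset)

lemma in_coset_space: "subgroup K G \<Longrightarrow> a \<in> carrier G \<Longrightarrow> a <# K \<in> coset_space G K"
  unfolding coset_space_def by blast

lemma self_in_coset_space: "subgroup K G \<Longrightarrow> K \<in> coset_space G K"
  using in_coset_space[of K \<one>] one_lcos by simp

lemma cj_mult: "g \<in> carrier G \<Longrightarrow> h \<in> carrier G \<Longrightarrow> A \<subseteq> carrier G \<Longrightarrow> cj G (g \<otimes> h) A = cj G g (cj G h A)"
proof -
  assume g: "g \<in> carrier G" and h: "h \<in> carrier G" and A: "A \<subseteq> carrier G"
  have e: "g \<otimes> h \<otimes> a \<otimes> inv (g \<otimes> h) = g \<otimes> (h \<otimes> a \<otimes> inv h) \<otimes> inv g" if "a \<in> A" for a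
    using g h that A by (simp add: inv_mult_group m_assoc subsetD)
  show ?thesis unfolding cj_def
  proof (intro equalityI subsetI)
    fix x assume "x \<in> {g \<otimes> h \<otimes> a \<otimes> inv (g \<otimes> h) |a. a \<in> A}"
    then obtain a where "a \<in> A" "x = g \<otimes> h \<otimes> a \<otimes> inv (g \<otimes> h)" by blast
    then show "x \<in> {g \<otimes> a \<otimes> inv g |a. a \<in> {h \<otimes> a \<otimes> inv h |a. a \<in> A}}" using e by blast
  next
    fix x assume "x \<in> {g \<otimes> a \<otimes> inv g |a. a \<in> {h \<otimes> a \<otimes> inv h |a. a \<in> A}}"
    then obtain a where a: "a \<in> A" "x = g \<otimes> (h \<otimes> a \<otimes> inv h) \<otimes> inv g" by blast
    then have "x = g \<otimes> h \<otimes> a \<otimes> inv (g \<otimes> h)" using e[OF a(1)] by simp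
    then show "x \<in> {g \<otimes> h \<otimes> a \<otimes> inv (g \<otimes> h) |a. a \<in> A}" using a(1) by blast
  qed
qed

lemma cj_one: "A \<subseteq> carrier G \<Longrightarrow> cj G \<one> A = A"
proof -
  assume A: "A \<subseteq> carrier G"
  have "\<one> \<otimes> a \<otimes> inv \<one> = a" if "a \<in> A" for a using that A by (auto simp: subsetD)
  then show ?thesis unfolding cj_def by force
qed

lemma cj_inv: "g \<in> carrier G \<Longrightarrow> A \<subseteq> carrier G \<Longrightarrow> cj G (inv g) (cj G g A) = A"
  using cj_mult[of "inv g" g A] cj_one by simp

lemma cj_carrier: "g \<in> carrier G \<Longrightarrow> A \<subseteq> carrier G \<Longrightarrow> cj G g A \<subseteq> carrier G"
  unfolding cj_def by (auto simp: subsetD)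

lemma cj_mono: "A \<subseteq> B \<Longrightarrow> cj G g A \<subseteq> cj G g B"
  unfolding cj_def by auto

lemma cj_subgroup: assumes "subgroup A G" "g \<in> carrier G" shows "subgroup (cj G g A) G"
proof (rule subgroupI)
  have A: "A \<subseteq> carrier G" using subgroup.subset[OF assms(1)] .
  show "cj G g A \<subseteq> carrier G" using cj_carrier[OF assms(2) A] .
  show "cj G g A \<noteq> {}" unfolding cj_def using subgroup.one_closed[OF assms(1)] by blast
  fix x y assume x: "x \<in> cj G g A" and y: "y \<in> cj G g A"
  then obtain a b where ab: "a \<in> A" "b \<in> A" "x = g \<otimes> a \<otimes> inv g" "y = g \<otimes> b \<otimes> inv g"
    unfolding cj_def by blast
  have ac: "a \<in> carrier G" "b \<in> carrier G" using ab A by auto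
  have "inv x = inv (inv g) \<otimes> inv a \<otimes> inv g" using ab ac assms(2) by (simp add: inv_mult_group m_assoc)
  then have "inv x = g \<otimes> inv a \<otimes> inv g" using assms(2) by simp
  then show "inv x \<in> cj G g A" unfolding cj_def using ab subgroup.m_inv_closed[OF assms(1)] by blast
  have "x \<otimes> y = g \<otimes> a \<otimes> (inv g \<otimes> g) \<otimes> b \<otimes> inv g" using ab ac assms(2) by (simp add: m_assoc)
  then have "x \<otimes> y = g \<otimes> (a \<otimes> b) \<otimes> inv g" using ab ac assms(2) by (simp add: m_assoc)
  then show "x \<otimes> y \<in> cj G g A" unfolding cj_def using ab subgroup.m_closed[OF assms(1)] by blast
qed

lemma cj_card: assumes "g \<in> carrier G" "A \<subseteq> carrier G" shows "card (cj G g A) = card A"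
proof -
  have "cj G g A = (\<lambda>a. g \<otimes> a \<otimes> inv g) ` A" unfolding cj_def by auto
  moreover have "inj_on (\<lambda>a. g \<otimes> a \<otimes> inv g) A"
    unfolding inj_on_def using assms by (auto simp: subsetD)
  ultimately show ?thesis by (simp add: card_image)
qed

lemma cj_finite: "finite A \<Longrightarrow> finite (cj G g A)"
proof -
  assume "finite A"
  moreover have "cj G g A = (\<lambda>a. g \<otimes> a \<otimes> inv g) ` A" unfolding cj_def by auto
  ultimately show ?thesis by simp
qed

lemma cj_self: assumes "subgroup K G" "g \<in> K" shows "cj G g K = K"
proof (rule equalityI)
  have gc: "g \<in> carrier G" using subgroup.mem_carrier[OF assms] .
  have gen: "cj G h K \<subseteq> K" if h: "h \<in> K" for h
  proof
    fix x assume "x \<in> cj G h K"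
    then obtain a where a: "a \<in> K" "x = h \<otimes> a \<otimes> inv h" unfolding cj_def by blast
    have 1: "h \<otimes> a \<in> K" using subgroup.m_closed[OF assms(1) h a(1)] .
    have 2: "inv h \<in> K" using subgroup.m_inv_closed[OF assms(1) h] .
    show "x \<in> K" unfolding a(2) by (rule subgroup.m_closed[OF assms(1) 1 2])
  qed
  show "cj G g K \<subseteq> K" using gen assms(2) .
  have "cj G (inv g) K \<subseteq> K" using gen[OF subgroup.m_inv_closed[OF assms]] .
  then have "cj G g (cj G (inv g) K) \<subseteq> cj G g K" by (rule cj_mono)
  then show "K \<subseteq> cj G g K" using cj_inv[of "inv g" K] gc subgroup.subset[OF assms(1)] by simp
qed

lemma card_dvd_sub:
  assumes "subgroup A G" "subgroup K G" "A \<subseteq> K" "finite K"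
  shows "card A dvd card K"
proof -
  interpret K: group "G\<lparr>carrier := K\<rparr>" using subgroup.subgroup_is_group[OF assms(2) is_group] .
  have "subgroup A (G\<lparr>carrier := K\<rparr>)" using subgroup_incl[OF assms(1-3)] .
  from K.lagrange[OF this] have "card (rcosets\<^bsub>G\<lparr>carrier := K\<rparr>\<^esub> A) * card A = card K"
    unfolding order_def by simp
  then show ?thesis by (metis dvd_triv_right)
qed

lemma sub_card_eq:
  assumes "A \<subseteq> B" "finite B" "card A = card B" shows "A = B"
  using assms card_subset_eq by blast

end

context group begin

lemma union_const: "S \<noteq> {} \<Longrightarrow> (\<forall>x\<in>S. Fn x = c) \<Longrightarrow> (\<Union>x\<in>S. Fn x) = c"
  by auto

lemma mkhom_apply:
  assumes H: "subgroup H G" and K: "subgroup K G" and g: "g \<in> carrier G"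
    and gHK: "cj G g H \<subseteq> K" and a: "a \<in> carrier G"
  shows "mkhom G H K g (a <# H) = (a \<otimes> inv g) <# K"
proof -
  have Hc: "H \<subseteq> carrier G" using subgroup.subset[OF H] .
  have "a <# H \<in> coset_space G H" using in_coset_space[OF H a] .
  then have "mkhom G H K g (a <# H) = (\<Union>c\<in>a <# H. (c \<otimes> inv g) <# K)"
    unfolding mkhom_def by simp
  also have "\<dots> = (a \<otimes> inv g) <# K"
  proof (rule union_const)
    have "a \<otimes> \<one> \<in> a <# H" unfolding l_coset_def using subgroup.one_closed[OF H] by (rule UN_I) simp
    then show "a <# H \<noteq> {}" by auto
    show "\<forall>c\<in>a <# H. (c \<otimes> inv g) <# K = (a \<otimes> inv g) <# K"
    proof
      fix c assume "c \<in> a <# H"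
      then obtain h where h: "h \<in> H" "c = a \<otimes> h" unfolding l_coset_def by auto
      have hc: "h \<in> carrier G" using subgroup.mem_carrier[OF H h(1)] .
      have "g \<otimes> h \<otimes> inv g \<in> cj G g H" unfolding cj_def using h(1) by blast
      then have in_K: "g \<otimes> h \<otimes> inv g \<in> K" using gHK by blast
      have "inv (a \<otimes> inv g) \<otimes> (c \<otimes> inv g) = g \<otimes> h \<otimes> inv g"
        using a g hc h(2) by (simp add: inv_mult_group m_assoc)
      then have "inv (a \<otimes> inv g) \<otimes> (c \<otimes> inv g) \<in> K" using in_K by simp
      moreover have "c \<in> carrier G" using a hc h(2) by simp
      ultimately show "(c \<otimes> inv g) <# K = (a \<otimes> inv g) <# K"
        using lcos_eq_iff[OF K, of "a \<otimes> inv g" "c \<otimes> inv g"] a g by simp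
    qed
  qed
  finally show ?thesis .
qed

lemma coset_space_E:
  assumes "C \<in> coset_space G H" obtains a where "a \<in> carrier G" "C = a <# H"
  using assms unfolding coset_space_def by blast

lemma mkhom_hom:
  assumes H: "subgroup H G" and K: "subgroup K G" and g: "g \<in> carrier G"
    and gHK: "cj G g H \<subseteq> K"
  shows "orb_hom G H K (mkhom G H K g)"
  unfolding orb_hom_def
proof (intro conjI)
  have Hc: "H \<subseteq> carrier G" using subgroup.subset[OF H] .
  show "mkhom G H K g \<in> coset_space G H \<rightarrow> coset_space G K"
  proof
    fix C assume "C \<in> coset_space G H"
    then obtain a where a: "a \<in> carrier G" "C = a <# H" by (rule coset_space_E)
    show "mkhom G H K g C \<in> coset_space G K"
      using mkhom_apply[OF H K g gHK a(1)] a in_coset_space[OF K, of "a \<otimes> inv g"] g by simp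
  qed
  show "mkhom G H K g \<in> extensional (coset_space G H)" unfolding mkhom_def by simp
  show "\<forall>b\<in>carrier G. \<forall>C\<in>coset_space G H. mkhom G H K g (b <# C) = b <# mkhom G H K g C"
  proof (intro ballI)
    fix b C assume b: "b \<in> carrier G" and C: "C \<in> coset_space G H"
    from C obtain a where a: "a \<in> carrier G" "C = a <# H" by (rule coset_space_E)
    have "b <# C = (b \<otimes> a) <# H" using lcos_m_assoc[OF Hc b a(1)] a(2) by simp
    then have "mkhom G H K g (b <# C) = (b \<otimes> a \<otimes> inv g) <# K"
      using mkhom_apply[OF H K g gHK, of "b \<otimes> a"] a b by simp
    also have "\<dots> = b <# ((a \<otimes> inv g) <# K)"
      using lcos_m_assoc[OF subgroup.subset[OF K] b, of "a \<otimes> inv g"] a b g by (simp add: m_assoc)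
    also have "\<dots> = b <# mkhom G H K g C" using mkhom_apply[OF H K g gHK a(1)] a(2) by simp
    finally show "mkhom G H K g (b <# C) = b <# mkhom G H K g C" .
  qed
qed

lemma hom_rep:
  assumes H: "subgroup H G" and K: "subgroup K G" and f: "orb_hom G H K f"
  obtains g where "g \<in> carrier G" "cj G g H \<subseteq> K" "f = mkhom G H K g"
proof -
  have Hc: "H \<subseteq> carrier G" using subgroup.subset[OF H] .
  have Kc: "K \<subseteq> carrier G" using subgroup.subset[OF K] .
  have fP: "f \<in> coset_space G H \<rightarrow> coset_space G K" and fE: "f \<in> extensional (coset_space G H)"
    and feq: "\<And>b C. b \<in> carrier G \<Longrightarrow> C \<in> coset_space G H \<Longrightarrow> f (b <# C) = b <# f C"
    using f unfolding orb_hom_def by auto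
  have "f H \<in> coset_space G K" using fP self_in_coset_space[OF H] by blast
  then obtain z where z: "z \<in> carrier G" "f H = z <# K" by (rule coset_space_E)
  have fa: "f (a <# H) = (a \<otimes> z) <# K" if a: "a \<in> carrier G" for a
    using feq[OF a self_in_coset_space[OF H]] z lcos_m_assoc[OF Kc a z(1)] by simp
  have gHK: "cj G (inv z) H \<subseteq> K"
  proof
    fix x assume "x \<in> cj G (inv z) H"
    then obtain h where h: "h \<in> H" "x = inv z \<otimes> h \<otimes> inv (inv z)" unfolding cj_def by blast
    have hc: "h \<in> carrier G" using subgroup.mem_carrier[OF H h(1)] .
    have "f (h <# H) = f H" using lcos_self[OF H h(1)] by simp
    then have "(h \<otimes> z) <# K = z <# K" using fa[OF hc] z by simp
    then have "inv z \<otimes> (h \<otimes> z) \<in> K" using lcos_eq_iff[OF K z(1), of "h \<otimes> z"] hc z by simp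
    then show "x \<in> K" using h(2) z hc by (simp add: m_assoc)
  qed
  have "f = mkhom G H K (inv z)"
  proof
    fix C show "f C = mkhom G H K (inv z) C"
    proof (cases "C \<in> coset_space G H")
      case True
      then obtain a where a: "a \<in> carrier G" "C = a <# H" by (rule coset_space_E)
      show ?thesis using fa[OF a(1)] mkhom_apply[OF H K _ gHK a(1)] z a by simp
    next
      case False
      then show ?thesis using fE unfolding mkhom_def extensional_def by simp
    qed
  qed
  then show ?thesis using that[OF inv_closed[OF z(1)] gHK] by simp
qed

lemma mkhom_eq_iff:
  assumes H: "subgroup H G" and K: "subgroup K G" and g: "g \<in> carrier G" and g': "g' \<in> carrier G"
    and gHK: "cj G g H \<subseteq> K" and g'HK: "cj G g' H \<subseteq> K"
  shows "mkhom G H K g = mkhom G H K g' \<longleftrightarrow> g \<otimes> inv g' \<in> K"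
proof
  assume "mkhom G H K g = mkhom G H K g'"
  then have "mkhom G H K g (\<one> <# H) = mkhom G H K g' (\<one> <# H)" by simp
  then have "inv g <# K = inv g' <# K"
    using mkhom_apply[OF H K g gHK one_closed] mkhom_apply[OF H K g' g'HK one_closed] g g' by simp
  then show "g \<otimes> inv g' \<in> K" using lcos_eq_iff[OF K, of "inv g" "inv g'"] g g' by simp
next
  assume e: "g \<otimes> inv g' \<in> K"
  show "mkhom G H K g = mkhom G H K g'"
  proof
    fix C show "mkhom G H K g C = mkhom G H K g' C"
    proof (cases "C \<in> coset_space G H")
      case True
      then obtain a where a: "a \<in> carrier G" "C = a <# H" by (rule coset_space_E)
      have "inv (a \<otimes> inv g) \<otimes> (a \<otimes> inv g') = g \<otimes> inv g'"
        using a g g' by (simp add: inv_mult_group m_assoc)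
      then have "(a \<otimes> inv g) <# K = (a \<otimes> inv g') <# K"
        using lcos_eq_iff[OF K, of "a \<otimes> inv g" "a \<otimes> inv g'"] a g g' e by simp
      then show ?thesis using mkhom_apply[OF H K g gHK a(1)] mkhom_apply[OF H K g' g'HK a(1)] a(2) by simp
    next
      case False
      then show ?thesis unfolding mkhom_def by simp
    qed
  qed
qed

lemma cj_comp_sub:
  assumes H: "subgroup H G" and a: "a \<in> carrier G" and b: "b \<in> carrier G"
    and aHK: "cj G a H \<subseteq> K" and bKL: "cj G b K \<subseteq> L"
  shows "cj G (b \<otimes> a) H \<subseteq> L"
  using cj_mult[OF b a subgroup.subset[OF H]] cj_mono[OF aHK, of b] bKL by simp

lemma mkhom_comp:
  assumes H: "subgroup H G" and K: "subgroup K G" and L: "subgroup L G"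
    and a: "a \<in> carrier G" and b: "b \<in> carrier G"
    and aHK: "cj G a H \<subseteq> K" and bKL: "cj G b K \<subseteq> L"
  shows "orb_comp G H (mkhom G K L b) (mkhom G H K a) = mkhom G H L (b \<otimes> a)"
proof
  have baHL: "cj G (b \<otimes> a) H \<subseteq> L" using cj_comp_sub[OF H a b aHK bKL] .
  fix C show "orb_comp G H (mkhom G K L b) (mkhom G H K a) C = mkhom G H L (b \<otimes> a) C"
  proof (cases "C \<in> coset_space G H")
    case True
    then obtain c where c: "c \<in> carrier G" "C = c <# H" by (rule coset_space_E)
    have "orb_comp G H (mkhom G K L b) (mkhom G H K a) C = mkhom G K L b (mkhom G H K a C)"
      unfolding orb_comp_def compose_def using True by simp
    also have "\<dots> = (c \<otimes> inv a \<otimes> inv b) <# L"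
      using mkhom_apply[OF H K a aHK c(1)] mkhom_apply[OF K L b bKL, of "c \<otimes> inv a"] c a b by simp
    also have "\<dots> = (c \<otimes> inv (b \<otimes> a)) <# L" using a b c by (simp add: inv_mult_group m_assoc)
    also have "\<dots> = mkhom G H L (b \<otimes> a) C" using mkhom_apply[OF H L _ baHL c(1)] a b c(2) by simp
    finally show ?thesis .
  next
    case False
    then show ?thesis unfolding orb_comp_def compose_def mkhom_def by simp
  qed
qed

lemma orb_id_mkhom:
  assumes H: "subgroup H G"
  shows "orb_id G H = mkhom G H H \<one>" and "cj G \<one> H \<subseteq> H"
proof -
  show c1: "cj G \<one> H \<subseteq> H" using cj_one[OF subgroup.subset[OF H]] by simp
  show "orb_id G H = mkhom G H H \<one>"
  proof
    fix C show "orb_id G H C = mkhom G H H \<one> C"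
    proof (cases "C \<in> coset_space G H")
      case True
      then obtain c where c: "c \<in> carrier G" "C = c <# H" by (rule coset_space_E)
      then show ?thesis unfolding orb_id_def using mkhom_apply[OF H H one_closed c1 c(1)] True by simp
    next
      case False
      then show ?thesis unfolding orb_id_def mkhom_def by simp
    qed
  qed
qed

lemma mkhom_iso:
  assumes H: "subgroup H G" and K: "subgroup K G" and g: "g \<in> carrier G" and e: "cj G g H = K"
  shows "orb_iso G H K (mkhom G H K g)"
proof -
  have Hc: "H \<subseteq> carrier G" using subgroup.subset[OF H] .
  have e2: "cj G (inv g) K = H" using cj_inv[OF g Hc] e by simp
  have s1: "cj G g H \<subseteq> K" using e by simp
  have s2: "cj G (inv g) K \<subseteq> H" using e2 by simp
  have "orb_comp G H (mkhom G K H (inv g)) (mkhom G H K g) = mkhom G H H \<one>"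
    using mkhom_comp[OF H K H g inv_closed[OF g] s1 s2] g by simp
  moreover have "orb_comp G K (mkhom G H K g) (mkhom G K H (inv g)) = mkhom G K K \<one>"
    using mkhom_comp[OF K H K inv_closed[OF g] g s2 s1] g by simp
  ultimately show ?thesis unfolding orb_iso_def
    using mkhom_hom[OF H K g s1] mkhom_hom[OF K H inv_closed[OF g] s2] orb_id_mkhom[OF H] orb_id_mkhom[OF K]
    by metis
qed

lemma hom_card_le:
  assumes H: "subgroup H G" and K: "subgroup K G" and f: "orb_hom G H K f" and fin: "finite K"
  shows "card H \<le> card K" and "card H dvd card K"
proof -
  obtain g where g: "g \<in> carrier G" "cj G g H \<subseteq> K" "f = mkhom G H K g" using hom_rep[OF H K f] .
  have "card (cj G g H) = card H" using cj_card[OF g(1) subgroup.subset[OF H]] .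
  moreover have "card (cj G g H) dvd card K"
    using card_dvd_sub[OF cj_subgroup[OF H g(1)] K g(2) fin] .
  ultimately show "card H dvd card K" by simp
  then show "card H \<le> card K" using fin subgroup.one_closed[OF K]
    by (metis card_0_eq dvd_imp_le empty_iff gr0I)
qed

lemma iso_card:
  assumes H: "subgroup H G" and K: "subgroup K G" and f: "orb_iso G H K f" and fH: "finite H" and fK: "finite K"
  shows "card H = card K"
proof -
  from f obtain f' where "orb_hom G H K f" "orb_hom G K H f'" unfolding orb_iso_def by blast
  then show ?thesis using hom_card_le(1)[OF H K _ fK] hom_card_le(1)[OF K H _ fH] by force
qed

end

context group begin

lemma unfact_max:
  assumes FS: "\<forall>Z\<in>F. subgroup Z G \<and> finite Z"
    and FC: "\<forall>Z\<in>F. \<forall>Y. subgroup Y G \<and> Y \<subseteq> Z \<longrightarrow> Y \<in> F"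
    and HF: "H \<in> F" and KF: "K \<in> F"
    and u: "orb_unfactorisable G F H K (mkhom G H K g)"
    and g: "g \<in> carrier G" and gHK: "cj G g H \<subseteq> K"
  shows "cj G g H \<noteq> K" and "\<And>L. subgroup L G \<Longrightarrow> cj G g H \<subseteq> L \<Longrightarrow> L \<subseteq> K \<Longrightarrow> L = cj G g H \<or> L = K"
proof -
  have H: "subgroup H G" and fH: "finite H" using FS HF by auto
  have K: "subgroup K G" and fK: "finite K" using FS KF by auto
  have Hc: "H \<subseteq> carrier G" using subgroup.subset[OF H] .
  show "cj G g H \<noteq> K"
  proof
    assume "cj G g H = K"
    then have "orb_iso G H K (mkhom G H K g)" using mkhom_iso[OF H K g] by simp
    then show False using u unfolding orb_unfactorisable_def by simp
  qed
  fix L assume L: "subgroup L G" and s1: "cj G g H \<subseteq> L" and s2: "L \<subseteq> K"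
  have LF: "L \<in> F" using FC KF L s2 by blast
  have fL: "finite L" using finite_subset[OF s2 fK] .
  have Lc: "L \<subseteq> carrier G" using subgroup.subset[OF L] .
  have c1: "cj G \<one> L \<subseteq> K" using cj_one[OF Lc] s2 by simp
  have eq: "orb_comp G H (mkhom G L K \<one>) (mkhom G H L g) = mkhom G H K g"
    using mkhom_comp[OF H L K g one_closed s1 c1] g by simp
  have "orb_iso G H L (mkhom G H L g) \<or> orb_iso G L K (mkhom G L K \<one>)"
    using u LF mkhom_hom[OF H L g s1] mkhom_hom[OF L K one_closed c1] eq
    unfolding orb_unfactorisable_def by blast
  then show "L = cj G g H \<or> L = K"
  proof
    assume "orb_iso G H L (mkhom G H L g)"
    then have "card H = card L" using iso_card[OF H L _ fH fL] by simp
    then have "card (cj G g H) = card L" using cj_card[OF g Hc] by simp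
    then show ?thesis using sub_card_eq[OF s1 fL] by simp
  next
    assume "orb_iso G L K (mkhom G L K \<one>)"
    then have "card L = card K" using iso_card[OF L K _ fL fK] by simp
    then show ?thesis using sub_card_eq[OF s2 fK] by simp
  qed
qed

lemma incl_unfact:
  assumes FS: "\<forall>Z\<in>F. subgroup Z G \<and> finite Z"
    and HF: "H \<in> F" and KF: "K \<in> F"
    and m: "maxsub G H K"
  shows "orb_unfactorisable G F H K (mkhom G H K \<one>)"
proof -
  have H: "subgroup H G" and fH: "finite H" using FS HF by auto
  have K: "subgroup K G" and fK: "finite K" using FS KF by auto
  have Hc: "H \<subseteq> carrier G" using subgroup.subset[OF H] .
  have HK: "H \<subseteq> K" and HneK: "H \<noteq> K"
    and mx: "\<And>L. subgroup L G \<Longrightarrow> H \<subseteq> L \<Longrightarrow> L \<subseteq> K \<Longrightarrow> L = H \<or> L = K"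
    using m unfolding maxsub_def by auto
  have c1: "cj G \<one> H \<subseteq> K" using cj_one[OF Hc] HK by simp
  have hom: "orb_hom G H K (mkhom G H K \<one>)" using mkhom_hom[OF H K one_closed c1] .
  have noiso: "\<not> orb_iso G H K (mkhom G H K \<one>)"
  proof
    assume "orb_iso G H K (mkhom G H K \<one>)"
    then have "card H = card K" using iso_card[OF H K _ fH fK] by simp
    then show False using sub_card_eq[OF HK fK] HneK by simp
  qed
  have fac: "orb_iso G H L h \<or> orb_iso G L K k"
    if LF: "L \<in> F" and h: "orb_hom G H L h" and k: "orb_hom G L K k"
      and e: "orb_comp G H k h = mkhom G H K \<one>" for L h k
  proof -
    have L: "subgroup L G" and fL: "finite L" using FS LF by auto
    have Lc: "L \<subseteq> carrier G" using subgroup.subset[OF L] .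
    obtain a where a: "a \<in> carrier G" "cj G a H \<subseteq> L" "h = mkhom G H L a" using hom_rep[OF H L h] .
    obtain b where b: "b \<in> carrier G" "cj G b L \<subseteq> K" "k = mkhom G L K b" using hom_rep[OF L K k] .
    have "mkhom G H K (b \<otimes> a) = mkhom G H K \<one>"
      using e mkhom_comp[OF H L K a(1) b(1) a(2) b(2)] a(3) b(3) by simp
    then have baK: "b \<otimes> a \<in> K"
      using mkhom_eq_iff[OF H K _ one_closed cj_comp_sub[OF H a(1) b(1) a(2) b(2)] c1] a(1) b(1) by simp
    define M where "M = cj G (inv a) L"
    have Msub: "subgroup M G" unfolding M_def using cj_subgroup[OF L inv_closed[OF a(1)]] .
    have "H = cj G (inv a) (cj G a H)" using cj_inv[OF a(1) Hc] by simp
    also have "\<dots> \<subseteq> cj G (inv a) L" using cj_mono[OF a(2)] .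
    finally have HM: "H \<subseteq> M" unfolding M_def .
    have "inv a = inv (b \<otimes> a) \<otimes> b" using a(1) b(1) by (simp add: inv_mult_group m_assoc)
    then have "M = cj G (inv (b \<otimes> a)) (cj G b L)" unfolding M_def
      using cj_mult[OF inv_closed[OF m_closed[OF b(1) a(1)]] b(1) Lc] by simp
    also have "\<dots> \<subseteq> cj G (inv (b \<otimes> a)) K" using cj_mono[OF b(2)] .
    also have "\<dots> = K" using cj_self[OF K subgroup.m_inv_closed[OF K baK]] .
    finally have MK: "M \<subseteq> K" .
    have cM: "card M = card L" unfolding M_def using cj_card[OF inv_closed[OF a(1)] Lc] .
    from mx[OF Msub HM MK] show ?thesis
    proof
      assume "M = H"
      then have "card (cj G a H) = card L" using cM cj_card[OF a(1) Hc] by simp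
      then have "cj G a H = L" using sub_card_eq[OF a(2) fL] by simp
      then show ?thesis using mkhom_iso[OF H L a(1)] a(3) by simp
    next
      assume "M = K"
      then have "card (cj G b L) = card K" using cM cj_card[OF b(1) Lc] by simp
      then have "cj G b L = K" using sub_card_eq[OF b(2) fK] by simp
      then show ?thesis using mkhom_iso[OF L K b(1)] b(3) by simp
    qed
  qed
  show ?thesis unfolding orb_unfactorisable_def using hom noiso fac by blast
qed

end

fun hp :: "('g,'b) monoid_scheme \<Rightarrow> (nat \<Rightarrow> 'g) \<Rightarrow> nat \<Rightarrow> 'g" where
  "hp G gs 0 = \<one>\<^bsub>G\<^esub>"
| "hp G gs (Suc m) = gs m \<otimes>\<^bsub>G\<^esub> hp G gs m"

context group begin

lemma hp_closed: "(\<forall>i<m. gs i \<in> carrier G) \<Longrightarrow> hp G gs m \<in> carrier G"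
  by (induction m) auto

lemma chain_tail:
  assumes sg: "\<forall>i\<le>n. subgroup (objs ! i) G"
    and gc: "\<forall>i<n. gs i \<in> carrier G"
    and gs: "\<forall>i<n. cj G (gs i) (objs ! i) \<subseteq> objs ! Suc i"
    and ij: "i \<le> j" and jn: "j \<le> n"
  shows "cj G (hp G gs j \<otimes> inv (hp G gs i)) (objs ! i) \<subseteq> objs ! j"
  using ij jn
proof (induction j)
  case 0
  then have i0: "i = 0" by simp
  have "objs ! 0 \<subseteq> carrier G" using subgroup.subset sg by blast
  then show ?case using i0 cj_one by simp
next
  case (Suc j)
  show ?case
  proof (cases "i = Suc j")
    case True
    have hc: "hp G gs (Suc j) \<in> carrier G" using hp_closed gc Suc.prems by auto
    have "objs ! Suc j \<subseteq> carrier G" using sg Suc.prems subgroup.subset by blast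
    then show ?thesis using True cj_one hc by simp
  next
    case False
    then have ij: "i \<le> j" using Suc.prems by simp
    have jn: "j < n" using Suc.prems by simp
    have IH: "cj G (hp G gs j \<otimes> inv (hp G gs i)) (objs ! i) \<subseteq> objs ! j" using Suc.IH ij jn by simp
    have hj: "hp G gs j \<in> carrier G" using hp_closed gc jn by auto
    have hi: "hp G gs i \<in> carrier G" using hp_closed gc jn ij by auto
    have g: "gs j \<in> carrier G" using gc jn by auto
    have oi: "objs ! i \<subseteq> carrier G" using sg jn ij subgroup.subset by (meson le_trans less_imp_le_nat)
    have "hp G gs (Suc j) \<otimes> inv (hp G gs i) = gs j \<otimes> (hp G gs j \<otimes> inv (hp G gs i))"
      using g hj hi by (simp add: m_assoc)
    then have "cj G (hp G gs (Suc j) \<otimes> inv (hp G gs i)) (objs ! i) = cj G (gs j) (cj G (hp G gs j \<otimes> inv (hp G gs i)) (objs ! i))"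
      using cj_mult[OF g _ oi] hj hi by simp
    also have "\<dots> \<subseteq> cj G (gs j) (objs ! j)" using cj_mono[OF IH] .
    also have "\<dots> \<subseteq> objs ! Suc j" using gs jn by simp
    finally show ?thesis .
  qed
qed

lemma chain_comp:
  assumes len: "length objs = Suc n" and lm: "length ms = n"
    and sg: "\<forall>i\<le>n. subgroup (objs ! i) G"
    and gc: "\<forall>i<n. gs i \<in> carrier G"
    and gs: "\<forall>i<n. cj G (gs i) (objs ! i) \<subseteq> objs ! Suc i"
    and ms: "\<forall>i<n. ms ! i = mkhom G (objs ! i) (objs ! Suc i) (gs i)"
  shows "orb_chain_comp G (objs ! 0) ms = mkhom G (objs ! 0) (objs ! n) (hp G gs n)"
proof -
  have step: "\<forall>a\<in>carrier G. foldl (\<lambda>acc m. m \<circ> acc) id (take m ms) (a <# objs ! 0) = (a \<otimes> inv (hp G gs m)) <# objs ! m"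
    if "m \<le> n" for m
    using that
  proof (induction m)
    case 0
    then show ?case by simp
  next
    case (Suc m)
    have mn: "m < n" using Suc.prems by simp
    have tk: "take (Suc m) ms = take m ms @ [ms ! m]" using mn lm by (simp add: take_Suc_conv_app_nth)
    show ?case
    proof
      fix a assume a: "a \<in> carrier G"
      have hm: "hp G gs m \<in> carrier G" using hp_closed gc mn by auto
      have g: "gs m \<in> carrier G" using gc mn by auto
      have s1: "subgroup (objs ! m) G" "subgroup (objs ! Suc m) G" using sg mn by auto
      have "foldl (\<lambda>acc m. m \<circ> acc) id (take (Suc m) ms) (a <# objs ! 0)
          = (ms ! m) (foldl (\<lambda>acc m. m \<circ> acc) id (take m ms) (a <# objs ! 0))"
        unfolding tk by simp
      also have "\<dots> = (ms ! m) ((a \<otimes> inv (hp G gs m)) <# objs ! m)"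
      proof -
        have "m \<le> n" using mn by simp
        then have ih: "foldl (\<lambda>acc m. m \<circ> acc) id (take m ms) (a <# objs ! 0) = (a \<otimes> inv (hp G gs m)) <# objs ! m"
          using Suc.IH a by blast
        show ?thesis by (subst ih) (rule refl)
      qed
      also have "\<dots> = (a \<otimes> inv (hp G gs m) \<otimes> inv (gs m)) <# objs ! Suc m"
        using mkhom_apply[OF s1 g, of "a \<otimes> inv (hp G gs m)"] gs mn ms a hm by simp
      also have "\<dots> = (a \<otimes> inv (hp G gs (Suc m))) <# objs ! Suc m"
        using a hm g by (simp add: inv_mult_group m_assoc)
      finally show "foldl (\<lambda>acc m. m \<circ> acc) id (take (Suc m) ms) (a <# objs ! 0) = (a \<otimes> inv (hp G gs (Suc m))) <# objs ! Suc m" .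
    qed
  qed
  have s0: "subgroup (objs ! 0) G" and sn: "subgroup (objs ! n) G" using sg by auto
  have hn: "hp G gs n \<in> carrier G" using hp_closed gc by auto
  have ct: "cj G (hp G gs n) (objs ! 0) \<subseteq> objs ! n"
    using chain_tail[OF sg gc gs, of 0 n] hn by simp
  show ?thesis
  proof
    fix C show "orb_chain_comp G (objs ! 0) ms C = mkhom G (objs ! 0) (objs ! n) (hp G gs n) C"
    proof (cases "C \<in> coset_space G (objs ! 0)")
      case True
      then obtain a where a: "a \<in> carrier G" "C = a <# objs ! 0" by (rule coset_space_E)
      have "orb_chain_comp G (objs ! 0) ms C = foldl (\<lambda>acc m. m \<circ> acc) id (take n ms) (a <# objs ! 0)"
        unfolding orb_chain_comp_def using True a lm by simp
      also have "\<dots> = (a \<otimes> inv (hp G gs n)) <# objs ! n" using step[of n] a by simp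
      also have "\<dots> = mkhom G (objs ! 0) (objs ! n) (hp G gs n) C"
        using mkhom_apply[OF s0 sn hn ct a(1)] a(2) by simp
      finally show ?thesis .
    next
      case False
      then show ?thesis unfolding orb_chain_comp_def mkhom_def by simp
    qed
  qed
qed

end

context group begin

lemma gen_self: "z \<in> carrier G \<Longrightarrow> z \<in> generate G {z}"
  using generate.incl[of z "{z}" G] by simp

lemma gen_sub: "z \<in> carrier G \<Longrightarrow> subgroup (generate G {z}) G"
  using generate_is_subgroup[of "{z}"] by simp

lemma gen_range: "z \<in> carrier G \<Longrightarrow> generate G {z} = range (\<lambda>n::int. z [^] n)"
  using generate_pow[of z] by auto

lemma cyc_gen:
  assumes H: "subgroup H G" and c: "cyclic_group (G\<lparr>carrier := H\<rparr>)"
  obtains z where "z \<in> H" "H = generate G {z}"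
proof -
  interpret Hg: group "G\<lparr>carrier := H\<rparr>" using subgroup.subgroup_is_group[OF H is_group] .
  obtain x where x: "x \<in> H" "H = range (\<lambda>n::int. x [^]\<^bsub>G\<lparr>carrier := H\<rparr>\<^esub> n)"
    using c Hg.cyclic_group by auto
  have xc: "x \<in> carrier G" using subgroup.mem_carrier[OF H x(1)] .
  have "(\<lambda>n::int. x [^]\<^bsub>G\<lparr>carrier := H\<rparr>\<^esub> n) = (\<lambda>n::int. x [^] n)"
    using int_pow_consistent[OF H x(1)] by simp
  then have "H = generate G {x}" using x(2) gen_range[OF xc] by simp
  then show ?thesis using that x(1) by blast
qed

lemma gen_cyc:
  assumes z: "z \<in> carrier G"
  shows "cyclic_group (G\<lparr>carrier := generate G {z}\<rparr>)"
proof -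
  let ?Y = "generate G {z}"
  have Y: "subgroup ?Y G" using gen_sub[OF z] .
  interpret Hg: group "G\<lparr>carrier := ?Y\<rparr>" using subgroup.subgroup_is_group[OF Y is_group] .
  have zY: "z \<in> ?Y" using gen_self[OF z] .
  have "(\<lambda>n::int. z [^]\<^bsub>G\<lparr>carrier := ?Y\<rparr>\<^esub> n) = (\<lambda>n::int. z [^] n)"
    using int_pow_consistent[OF Y zY] by simp
  then have "carrier (G\<lparr>carrier := ?Y\<rparr>) = range (\<lambda>n::int. z [^]\<^bsub>G\<lparr>carrier := ?Y\<rparr>\<^esub> n)"
    using gen_range[OF z] by simp
  then show ?thesis using Hg.cyclic_group zY by auto
qed

lemma gen_comm:
  assumes z: "z \<in> carrier G" and u: "u \<in> generate G {z}" and a: "a \<in> generate G {z}"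
  shows "u \<otimes> a = a \<otimes> u"
proof -
  obtain i j :: int where "u = z [^] i" "a = z [^] j" using u a gen_range[OF z] by auto
  then show ?thesis using int_pow_mult[OF z, of i j] int_pow_mult[OF z, of j i] by (simp add: add.commute)
qed

lemma finite_pow_card:
  assumes A: "subgroup A G" and fA: "finite A" and a: "a \<in> A"
  shows "a [^] card A = \<one>"
proof -
  interpret Ag: group "G\<lparr>carrier := A\<rparr>" using subgroup.subgroup_is_group[OF A is_group] .
  have "a [^]\<^bsub>G\<lparr>carrier := A\<rparr>\<^esub> order (G\<lparr>carrier := A\<rparr>) = \<one>\<^bsub>G\<lparr>carrier := A\<rparr>\<^esub>"
    using Ag.pow_order_eq_1 a by simp
  then show ?thesis unfolding order_def using nat_pow_consistent[of a "card A" A] by simp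
qed

lemma cyc_sub:
  assumes z: "z \<in> carrier G" and fY: "finite (generate G {z})"
    and A: "subgroup A G" and AY: "A \<subseteq> generate G {z}"
  shows "A = generate G {z [^] (ord z div card A)}"
proof -
  let ?Y = "generate G {z}"
  define n where "n = ord z"
  define d where "d = card A"
  define e where "e = n div d"
  define w where "w = z [^] e"
  have Y: "subgroup ?Y G" using gen_sub[OF z] .
  have nY: "n = card ?Y" unfolding n_def using generate_pow_card[OF z] .
  have npos: "n > 0" using nY fY gen_self[OF z] by (metis card_gt_0_iff empty_iff)
  have fA: "finite A" using finite_subset[OF AY fY] .
  have dpos: "d > 0" unfolding d_def using fA subgroup.one_closed[OF A] by (metis card_gt_0_iff empty_iff)
  have ddvd: "d dvd n" unfolding d_def nY using card_dvd_sub[OF A Y AY fY] .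
  have ned: "n = e * d" unfolding e_def using ddvd by simp
  have epos: "e > 0" using ned npos by (metis gr0I mult_is_0)
  have wc: "w \<in> carrier G" unfolding w_def using z by simp
  have "w = z [^] (int e)" unfolding w_def by (simp add: int_pow_int)
  then have wY: "w \<in> ?Y" using gen_range[OF z] by auto
  have "ord w = n div gcd n e" unfolding w_def n_def using ord_pow_gen[OF z, of e] epos by simp
  also have "gcd n e = e" using ned by simp
  also have "n div e = d" using ned epos by simp
  finally have ordw: "ord w = d" .
  have WY: "generate G {w} \<subseteq> ?Y" using generate_subgroup_incl[of "{w}" ?Y] wY Y by simp
  have fW: "finite (generate G {w})" using finite_subset[OF WY fY] .
  have cW: "card (generate G {w}) = d" using generate_pow_card[OF wc] ordw by simp
  have AW: "A \<subseteq> generate G {w}"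
  proof
    fix a assume aA: "a \<in> A"
    then have "a \<in> ?Y" using AY by blast
    then obtain i :: int where i: "a = z [^] i" using gen_range[OF z] by auto
    have "a [^] d = \<one>" unfolding d_def using finite_pow_card[OF A fA aA] .
    then have "a [^] (int d) = \<one>" by (simp add: int_pow_int)
    then have "z [^] (i * int d) = \<one>" using i int_pow_pow[OF z] by simp
    then have "int n dvd i * int d" using int_pow_eq_id[OF z] unfolding n_def by simp
    then have "int e * int d dvd i * int d" using ned by simp
    then have "int e dvd i" using dpos by (simp add: dvd_mult_cancel_right)
    then obtain k where k: "i = int e * k" by (auto elim: dvdE)
    have "a = (z [^] (int e)) [^] k" using i k int_pow_pow[OF z] by simp
    also have "\<dots> = w [^] k" unfolding w_def by (simp add: int_pow_int)
    finally show "a \<in> generate G {w}" using gen_range[OF wc] by auto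
  qed
  have "A = generate G {w}" using sub_card_eq[OF AW fW] cW unfolding d_def by simp
  then show ?thesis unfolding w_def e_def n_def d_def .
qed

lemma cyc_sub_unique:
  assumes z: "z \<in> carrier G" and fY: "finite (generate G {z})"
    and A: "subgroup A G" and AY: "A \<subseteq> generate G {z}"
    and B: "subgroup B G" and BY: "B \<subseteq> generate G {z}"
    and c: "card A = card B"
  shows "A = B"
  using cyc_sub[OF z fY A AY] cyc_sub[OF z fY B BY] c by simp

end

lemma two_primes:
  fixes n :: nat
  assumes n1: "n > 1" and np: "\<not> (\<exists>p k. Factorial_Ring.prime p \<and> n = p ^ k)"
  obtains p q where "Factorial_Ring.prime p" "Factorial_Ring.prime q" "p \<noteq> q" "p dvd n" "q dvd n"
proof -
  obtain p where p: "Factorial_Ring.prime p" "p dvd n" using prime_factor_nat[of n] n1 by auto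
  obtain y where y: "n = p ^ multiplicity p n * y" "\<not> p dvd y"
  proof (rule multiplicity_decompose')
    show "n \<noteq> 0" using n1 by simp
    show "\<not> is_unit p" using p(1) not_prime_unit by blast
  qed
  have "y \<noteq> 1"
  proof
    assume "y = 1"
    then have "n = p ^ multiplicity p n" using y(1) by simp
    then show False using np p(1) by blast
  qed
  then obtain q where q: "Factorial_Ring.prime q" "q dvd y" using prime_factor_nat by blast
  have "p \<noteq> q" using q y by blast
  moreover have "q dvd n" using q y by (metis dvd_mult)
  ultimately show ?thesis using that p q by blast
qed

context group begin

lemma cyc_max_index:
  assumes z: "z \<in> carrier G" and fK: "finite (generate G {z})"
    and q: "Factorial_Ring.prime q" and cK: "card (generate G {z}) = q ^ j"
    and M: "subgroup M G" and MK: "M \<subseteq> generate G {z}" and MneK: "M \<noteq> generate G {z}"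
    and mx: "\<And>L. subgroup L G \<Longrightarrow> M \<subseteq> L \<Longrightarrow> L \<subseteq> generate G {z} \<Longrightarrow> L = M \<or> L = generate G {z}"
  shows "card (generate G {z}) = q * card M"
proof -
  let ?K = "generate G {z}"
  have K: "subgroup ?K G" using gen_sub[OF z] .
  have q1: "q > 1" using q prime_gt_1_nat by blast
  have "card M dvd q ^ j" using card_dvd_sub[OF M K MK fK] cK by simp
  then obtain a where a: "a \<le> j" "card M = q ^ a" using divides_primepow_nat[OF q] by blast
  have "a \<noteq> j" using a cK sub_card_eq[OF MK fK] MneK by auto
  then have aj: "a < j" using a by simp
  have n: "ord z = q ^ j" using generate_pow_card[OF z] cK by simp
  define L where "L = generate G {z [^] q}"
  have zq: "z [^] q \<in> carrier G" using z by simp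
  have L: "subgroup L G" unfolding L_def using gen_sub[OF zq] .
  have zqK: "z [^] q \<in> ?K"
  proof -
    have "z [^] q = z [^] (int q)" by (simp add: int_pow_int)
    then show ?thesis using gen_range[OF z] by auto
  qed
  have LK: "L \<subseteq> ?K" unfolding L_def using generate_subgroup_incl[of "{z [^] q}" ?K] zqK K by simp
  have "ord (z [^] q) = q ^ j div gcd (q ^ j) q" using ord_pow_gen[OF z, of q] n q1 by simp
  also have "gcd (q ^ j) q = q" using aj by (metis dvd_power gcd_nat.absorb_iff2 gr_zeroI less_nat_zero_code)
  also have "q ^ j div q = q ^ (j - 1)" using aj q1 by (simp add: power_diff)
  finally have cL: "card L = q ^ (j - 1)" unfolding L_def using generate_pow_card[OF zq] by simp
  have "q ^ (j - 1) \<noteq> q ^ j" using aj q1 by (simp add: power_inject_exp)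
  then have LneK: "L \<noteq> ?K" using cL cK by auto
  have "M = generate G {z [^] (ord z div card M)}" using cyc_sub[OF z fK M MK] .
  moreover have "ord z div card M = q * q ^ (j - a - 1)"
  proof -
    have "ord z div card M = q ^ (j - a)" using n a(2) power_diff[of q a j] aj q1 by simp
    moreover have "j - a = Suc (j - a - 1)" using aj by simp
    ultimately show ?thesis by (metis power_Suc)
  qed
  ultimately have M2: "M = generate G {(z [^] q) [^] (q ^ (j - a - 1))}"
    using nat_pow_pow[OF z] by simp
  have "(z [^] q) [^] (q ^ (j - a - 1)) \<in> L"
  proof -
    have "(z [^] q) [^] (q ^ (j - a - 1)) = (z [^] q) [^] (int (q ^ (j - a - 1)))" by (rule int_pow_int[symmetric])
    then show ?thesis unfolding L_def using gen_range[OF zq] by auto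
  qed
  then have MsubL: "M \<subseteq> L" using M2 generate_subgroup_incl[OF _ L] by simp
  have "L = M" using mx[OF L MsubL LK] LneK by simp
  then have "card M = q ^ (j - 1)" using cL by simp
  then show ?thesis using cK aj by (simp add: power_eq_if)
qed

end

context group begin

lemma exists_max:
  assumes K: "subgroup K G" and fK: "finite K"
  shows "subgroup A G \<Longrightarrow> A \<subseteq> K \<Longrightarrow> A \<noteq> K \<Longrightarrow> \<exists>M. maxsub G M K \<and> A \<subseteq> M"
proof (induction "card K - card A" arbitrary: A rule: less_induct)
  case less
  show ?case
  proof (cases "maxsub G A K")
    case True
    then show ?thesis by blast
  next
    case False
    then obtain L where L: "subgroup L G" "A \<subseteq> L" "L \<subseteq> K" "L \<noteq> A" "L \<noteq> K"
      using less.prems K unfolding maxsub_def by blast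
    have fL: "finite L" using finite_subset[OF L(3) fK] .
    have "card A < card L" using L(2,4) fL by (simp add: psubset_card_mono psubset_eq)
    moreover have "card L \<le> card K" using L(3) fK by (simp add: card_mono)
    ultimately have "card K - card L < card K - card A" by simp
    then obtain M where "maxsub G M K" "L \<subseteq> M" using less.hyps[of L] L by blast
    then show ?thesis using L(2) by blast
  qed
qed

lemma max_chain:
  shows "subgroup B G \<Longrightarrow> finite B \<Longrightarrow> \<exists>m objs. length objs = Suc m \<and> objs ! 0 = {\<one>} \<and> objs ! m = B \<and>
     (\<forall>i\<le>m. subgroup (objs ! i) G \<and> objs ! i \<subseteq> B) \<and> (\<forall>i<m. maxsub G (objs ! i) (objs ! Suc i))"
proof (induction "card B" arbitrary: B rule: less_induct)
  case less
  show ?case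
  proof (cases "B = {\<one>}")
    case True
    then show ?thesis using triv_subgroup by (intro exI[of _ 0] exI[of _ "[B]"]) auto
  next
    case False
    have oneB: "{\<one>} \<subseteq> B" using subgroup.one_closed[OF less.prems(1)] by simp
    obtain M where M: "maxsub G M B" using exists_max[OF less.prems triv_subgroup oneB] False by auto
    have Msub: "subgroup M G" "M \<subseteq> B" "M \<noteq> B" using M unfolding maxsub_def by auto
    have fM: "finite M" using finite_subset[OF Msub(2) less.prems(2)] .
    have "card M < card B" using Msub(2,3) less.prems(2) by (simp add: psubset_card_mono psubset_eq)
    then obtain m objs where o: "length objs = Suc m" "objs ! 0 = {\<one>}" "objs ! m = M"
      "\<forall>i\<le>m. subgroup (objs ! i) G \<and> objs ! i \<subseteq> M" "\<forall>i<m. maxsub G (objs ! i) (objs ! Suc i)"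
      using less.hyps[OF _ Msub(1) fM] by blast
    define objs' where "objs' = objs @ [B]"
    have n1: "objs' ! i = objs ! i" if "i \<le> m" for i using that o(1) unfolding objs'_def by (simp add: nth_append)
    have n2: "objs' ! Suc m = B" using o(1) unfolding objs'_def by (simp add: nth_append)
    have "length objs' = Suc (Suc m)" using o(1) unfolding objs'_def by simp
    moreover have "objs' ! 0 = {\<one>}" using n1[of 0] o(2) by simp
    moreover have "\<forall>i\<le>Suc m. subgroup (objs' ! i) G \<and> objs' ! i \<subseteq> B"
    proof (intro allI impI)
      fix i assume i: "i \<le> Suc m"
      show "subgroup (objs' ! i) G \<and> objs' ! i \<subseteq> B"
      proof (cases "i = Suc m")
        case True then show ?thesis using n2 less.prems(1) by simp
      next
        case False then have "i \<le> m" using i by simp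
        then show ?thesis using n1 o(4) Msub(2) by force
      qed
    qed
    moreover have "\<forall>i<Suc m. maxsub G (objs' ! i) (objs' ! Suc i)"
    proof (intro allI impI)
      fix i assume i: "i < Suc m"
      show "maxsub G (objs' ! i) (objs' ! Suc i)"
      proof (cases "i = m")
        case True then show ?thesis using n1[of m] n2 o(3) M by simp
      next
        case False then have "i < m" using i by simp
        then show ?thesis using n1[of i] n1[of "Suc i"] o(5) by simp
      qed
    qed
    ultimately show ?thesis using n2 by blast
  qed
qed

lemma sub_pow_closed: "subgroup M G \<Longrightarrow> a \<in> M \<Longrightarrow> a [^] (k::nat) \<in> M"
proof (induction k)
  case 0 then show ?case using subgroup.one_closed by simp
next
  case (Suc k)
  then show ?case using subgroup.m_closed[OF Suc.prems(1) Suc.IH[OF Suc.prems] Suc.prems(2)] by simp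
qed

lemma two_max:
  assumes K: "subgroup K G" and fK: "finite K"
    and nc: "\<not> (cyclic_group (G\<lparr>carrier := K\<rparr>) \<and> (\<exists>p k. Factorial_Ring.prime (p::nat) \<and> card K = p ^ k))"
  shows "\<exists>M1 M2. maxsub G M1 K \<and> maxsub G M2 K \<and> M1 \<noteq> M2"
proof (rule ccontr)
  assume "\<not> ?thesis"
  then have uniq: "\<And>M1 M2. maxsub G M1 K \<Longrightarrow> maxsub G M2 K \<Longrightarrow> M1 = M2" by blast
  have oneK: "{\<one>} \<subseteq> K" using subgroup.one_closed[OF K] by simp
  show False
  proof (cases "K = {\<one>}")
    case True
    have "generate G {\<one>} = {\<one>}" using gen_range[OF one_closed] by auto
    then have "cyclic_group (G\<lparr>carrier := K\<rparr>)" using gen_cyc[OF one_closed] True by simp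
    moreover have "card K = 2 ^ 0" using True by simp
    ultimately show False using nc two_is_prime_nat by blast
  next
    case False
    obtain M where M: "maxsub G M K" using exists_max[OF K fK triv_subgroup oneK] False by auto
    have Msub: "subgroup M G" "M \<subseteq> K" "M \<noteq> K" using M unfolding maxsub_def by auto
    have all: "A \<subseteq> M" if A1: "subgroup A G" "A \<subseteq> K" "A \<noteq> K" for A
    proof -
      obtain M' where "maxsub G M' K" "A \<subseteq> M'" using exists_max[OF K fK A1] by blast
      then show ?thesis using uniq[OF M] by blast
    qed
    obtain g where g: "g \<in> K" "g \<notin> M" using Msub(2,3) by blast
    have gc: "g \<in> carrier G" using subgroup.mem_carrier[OF K g(1)] .
    have gK: "generate G {g} \<subseteq> K" using generate_subgroup_incl[of "{g}" K] g(1) K by simp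
    have Kg: "K = generate G {g}"
    proof (rule ccontr)
      assume "K \<noteq> generate G {g}"
      then have "generate G {g} \<subseteq> M" using all[OF gen_sub[OF gc] gK] by simp
      then show False using gen_self[OF gc] g(2) by blast
    qed
    have cyc: "cyclic_group (G\<lparr>carrier := K\<rparr>)" using gen_cyc[OF gc] Kg by simp
    define n where "n = card K"
    have nord: "ord g = n" unfolding n_def using generate_pow_card[OF gc] Kg by simp
    have npos: "n > 0" unfolding n_def using fK oneK by (metis card_gt_0_iff empty_iff insert_subset)
    have "n \<noteq> 1"
    proof
      assume "n = 1"
      then obtain x where "K = {x}" unfolding n_def using card_1_singletonE by blast
      then show False using oneK False by auto
    qed
    then have n1: "n > 1" using npos by simp
    have np: "\<not> (\<exists>p k. Factorial_Ring.prime p \<and> n = p ^ k)" using nc cyc unfolding n_def by blast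
    obtain p q where pq: "Factorial_Ring.prime p" "Factorial_Ring.prime q" "p \<noteq> q" "p dvd n" "q dvd n"
      using two_primes[OF n1 np] by blast
    have inM: "g [^] r \<in> M" if r: "Factorial_Ring.prime r" "r dvd n" for r
    proof (rule ccontr)
      assume nin: "g [^] r \<notin> M"
      have grc: "g [^] r \<in> carrier G" using gc by simp
      have grK: "g [^] r \<in> K" using sub_pow_closed[OF K g(1)] .
      have sK: "generate G {g [^] r} \<subseteq> K" using generate_subgroup_incl[of "{g [^] r}" K] grK K by simp
      have "generate G {g [^] r} = K"
      proof (rule ccontr)
        assume "generate G {g [^] r} \<noteq> K"
        then have "generate G {g [^] r} \<subseteq> M" using all[OF gen_sub[OF grc] sK] by simp
        then show False using gen_self[OF grc] nin by blast
      qed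
      then have "ord (g [^] r) = n" using generate_pow_card[OF grc] unfolding n_def by simp
      moreover have "ord (g [^] r) = n div r"
      proof -
        have r1: "r > 1" using r(1) prime_gt_1_nat by blast
        have "gcd n r = r" using r(2) by (simp add: gcd_nat.absorb2)
        then show ?thesis using ord_pow_gen[OF gc, of r] nord r1 by simp
      qed
      moreover have "n div r < n" using npos r(1) prime_gt_1_nat by simp
      ultimately show False by simp
    qed
    have cop: "gcd p q = 1" using pq primes_coprime coprime_iff_gcd_eq_1 by blast
    obtain x y where xy: "p * x = q * y + 1" using bezout_nat[of p q] cop pq(1) by (metis not_prime_0)
    have gpx: "g [^] (p * x) \<in> M" using sub_pow_closed[OF Msub(1) inM[OF pq(1) pq(4)], of x] nat_pow_pow[OF gc] by simp
    have gqy: "g [^] (q * y) \<in> M" using sub_pow_closed[OF Msub(1) inM[OF pq(2) pq(5)], of y] nat_pow_pow[OF gc] by simp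
    have "g [^] (p * x) = g [^] (q * y) \<otimes> g" using xy nat_pow_mult[OF gc, of "q * y" 1] by simp
    then have "g = inv (g [^] (q * y)) \<otimes> g [^] (p * x)" using gc by simp
    moreover have "inv (g [^] (q * y)) \<otimes> g [^] (p * x) \<in> M"
      using subgroup.m_closed[OF Msub(1) subgroup.m_inv_closed[OF Msub(1) gqy] gpx] .
    ultimately show False using g(2) by simp
  qed
qed

end

context group begin

lemma chain_data:
  assumes FS: "\<forall>Z\<in>F. subgroup Z G \<and> finite Z"
    and FC: "\<forall>Z\<in>F. \<forall>Y. subgroup Y G \<and> Y \<subseteq> Z \<longrightarrow> Y \<in> F"
    and ch: "orb_chain G F x y objs ms"
  obtains gs where "\<forall>i<length ms. gs i \<in> carrier G"
    "\<forall>i<length ms. cj G (gs i) (objs ! i) \<subseteq> objs ! Suc i"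
    "\<forall>i<length ms. ms ! i = mkhom G (objs ! i) (objs ! Suc i) (gs i)"
    "\<forall>i<length ms. cj G (gs i) (objs ! i) \<noteq> objs ! Suc i \<and>
       (\<forall>L. subgroup L G \<longrightarrow> cj G (gs i) (objs ! i) \<subseteq> L \<longrightarrow> L \<subseteq> objs ! Suc i \<longrightarrow> L = cj G (gs i) (objs ! i) \<or> L = objs ! Suc i)"
    "\<forall>i\<le>length ms. subgroup (objs ! i) G \<and> finite (objs ! i) \<and> objs ! i \<in> F"
    "orb_chain_comp G x ms = mkhom G x y (hp G gs (length ms))"
proof -
  let ?n = "length ms"
  have len: "length objs = Suc ?n" and o0: "objs ! 0 = x" and on: "objs ! ?n = y"
    and sF: "set objs \<subseteq> F"
    and un: "\<forall>i<?n. orb_unfactorisable G F (objs ! i) (objs ! Suc i) (ms ! i)"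
    using ch unfolding orb_chain_def by auto
  have inF: "\<forall>i\<le>?n. subgroup (objs ! i) G \<and> finite (objs ! i) \<and> objs ! i \<in> F"
  proof (intro allI impI)
    fix i assume "i \<le> ?n"
    then have "objs ! i \<in> F" using len sF nth_mem[of i objs] by auto
    then show "subgroup (objs ! i) G \<and> finite (objs ! i) \<and> objs ! i \<in> F" using FS by auto
  qed
  have "\<forall>i. \<exists>g. i < ?n \<longrightarrow> (g \<in> carrier G \<and> cj G g (objs ! i) \<subseteq> objs ! Suc i \<and> ms ! i = mkhom G (objs ! i) (objs ! Suc i) g)"
  proof
    fix i show "\<exists>g. i < ?n \<longrightarrow> (g \<in> carrier G \<and> cj G g (objs ! i) \<subseteq> objs ! Suc i \<and> ms ! i = mkhom G (objs ! i) (objs ! Suc i) g)"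
    proof (cases "i < ?n")
      case True
      have s: "subgroup (objs ! i) G" "subgroup (objs ! Suc i) G" using inF True by auto
      have "orb_hom G (objs ! i) (objs ! Suc i) (ms ! i)" using un True unfolding orb_unfactorisable_def by blast
      then obtain g where "g \<in> carrier G" "cj G g (objs ! i) \<subseteq> objs ! Suc i" "ms ! i = mkhom G (objs ! i) (objs ! Suc i) g"
        using hom_rep[OF s] by metis
      then show ?thesis by blast
    next
      case False then show ?thesis by blast
    qed
  qed
  then obtain gs where gs: "\<forall>i. i < ?n \<longrightarrow> (gs i \<in> carrier G \<and> cj G (gs i) (objs ! i) \<subseteq> objs ! Suc i \<and> ms ! i = mkhom G (objs ! i) (objs ! Suc i) (gs i))"
    using choice[of "\<lambda>i g. i < ?n \<longrightarrow> (g \<in> carrier G \<and> cj G g (objs ! i) \<subseteq> objs ! Suc i \<and> ms ! i = mkhom G (objs ! i) (objs ! Suc i) g)"] by blast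
  have g1: "\<forall>i<?n. gs i \<in> carrier G" using gs by blast
  have g2: "\<forall>i<?n. cj G (gs i) (objs ! i) \<subseteq> objs ! Suc i" using gs by blast
  have g3: "\<forall>i<?n. ms ! i = mkhom G (objs ! i) (objs ! Suc i) (gs i)" using gs by blast
  have g4: "\<forall>i<?n. cj G (gs i) (objs ! i) \<noteq> objs ! Suc i \<and>
       (\<forall>L. subgroup L G \<longrightarrow> cj G (gs i) (objs ! i) \<subseteq> L \<longrightarrow> L \<subseteq> objs ! Suc i \<longrightarrow> L = cj G (gs i) (objs ! i) \<or> L = objs ! Suc i)"
  proof (intro allI impI)
    fix i assume i: "i < ?n"
    have F1: "objs ! i \<in> F" "objs ! Suc i \<in> F" using inF i by auto
    have u: "orb_unfactorisable G F (objs ! i) (objs ! Suc i) (mkhom G (objs ! i) (objs ! Suc i) (gs i))"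
      using un g3 i by metis
    have A1: "cj G (gs i) (objs ! i) \<noteq> objs ! Suc i"
      using unfact_max(1)[OF FS FC F1 u] g1 g2 i by blast
    have A2: "\<forall>L. subgroup L G \<longrightarrow> cj G (gs i) (objs ! i) \<subseteq> L \<longrightarrow> L \<subseteq> objs ! Suc i \<longrightarrow> L = cj G (gs i) (objs ! i) \<or> L = objs ! Suc i"
      using unfact_max(2)[OF FS FC F1 u] g1 g2 i by blast
    show "cj G (gs i) (objs ! i) \<noteq> objs ! Suc i \<and>
       (\<forall>L. subgroup L G \<longrightarrow> cj G (gs i) (objs ! i) \<subseteq> L \<longrightarrow> L \<subseteq> objs ! Suc i \<longrightarrow> L = cj G (gs i) (objs ! i) \<or> L = objs ! Suc i)"
      using A1 A2 by blast
  qed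
  have sg: "\<forall>i\<le>?n. subgroup (objs ! i) G" using inF by blast
  have "orb_chain_comp G (objs ! 0) ms = mkhom G (objs ! 0) (objs ! ?n) (hp G gs ?n)"
    using chain_comp[OF len refl sg g1 g2 g3] .
  then have "orb_chain_comp G x ms = mkhom G x y (hp G gs ?n)" using o0 on by simp
  then show ?thesis using that[OF g1 g2 g3 g4 inF] by blast
qed

lemma chain_cards:
  assumes HYP: "\<forall>H\<in>F. cyclic_group (G\<lparr>carrier := H\<rparr>) \<and> (\<exists>p k. Factorial_Ring.prime (p::nat) \<and> card H = p ^ k)"
    and g1: "\<forall>i<n. gs i \<in> carrier G"
    and g2: "\<forall>i<n. cj G (gs i) (objs ! i) \<subseteq> objs ! Suc i"
    and g4: "\<forall>i<n. cj G (gs i) (objs ! i) \<noteq> objs ! Suc i \<and>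
       (\<forall>L. subgroup L G \<longrightarrow> cj G (gs i) (objs ! i) \<subseteq> L \<longrightarrow> L \<subseteq> objs ! Suc i \<longrightarrow> L = cj G (gs i) (objs ! i) \<or> L = objs ! Suc i)"
    and inF: "\<forall>i\<le>n. subgroup (objs ! i) G \<and> finite (objs ! i) \<and> objs ! i \<in> F"
    and p: "Factorial_Ring.prime p" and cy: "card (objs ! n) = p ^ k"
  shows "\<forall>i\<le>n. card (objs ! i) = card (objs ! 0) * p ^ i"
proof -
  have sg: "\<forall>i\<le>n. subgroup (objs ! i) G" using inF by blast
  have dv: "card (objs ! i) dvd p ^ k" if i: "i \<le> n" for i
  proof -
    have hn: "hp G gs n \<in> carrier G" using hp_closed g1 by auto
    have hi: "hp G gs i \<in> carrier G" using hp_closed g1 i by auto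
    have b: "hp G gs n \<otimes> inv (hp G gs i) \<in> carrier G" using hn hi by simp
    have Si: "subgroup (objs ! i) G" "finite (objs ! i)" using inF i by auto
    have Sn: "subgroup (objs ! n) G" "finite (objs ! n)" using inF by auto
    have t: "cj G (hp G gs n \<otimes> inv (hp G gs i)) (objs ! i) \<subseteq> objs ! n"
      using chain_tail[OF sg g1 g2 i le_refl] .
    have "card (cj G (hp G gs n \<otimes> inv (hp G gs i)) (objs ! i)) dvd card (objs ! n)"
      using card_dvd_sub[OF cj_subgroup[OF Si(1) b] Sn(1) t Sn(2)] .
    then show ?thesis using cj_card[OF b subgroup.subset[OF Si(1)]] cy by simp
  qed
  have step: "card (objs ! Suc i) = p * card (objs ! i)" if i: "i < n" for i
  proof -
    let ?K = "objs ! Suc i"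
    let ?M = "cj G (gs i) (objs ! i)"
    have K: "subgroup ?K G" "finite ?K" "?K \<in> F" using inF i by auto
    have Si: "subgroup (objs ! i) G" using inF i by auto
    have gi: "gs i \<in> carrier G" using g1 i by auto
    obtain w where w: "w \<in> ?K" "?K = generate G {w}" using cyc_gen[OF K(1)] HYP K(3) by blast
    have wc: "w \<in> carrier G" using subgroup.mem_carrier[OF K(1) w(1)] .
    obtain q j where qj: "Factorial_Ring.prime q" "card ?K = q ^ j" using HYP K(3) by blast
    have M: "subgroup ?M G" using cj_subgroup[OF Si gi] .
    have MK: "?M \<subseteq> ?K" using g2 i by blast
    have Mne: "?M \<noteq> ?K" using g4 i by blast
    have mx: "\<And>L. subgroup L G \<Longrightarrow> ?M \<subseteq> L \<Longrightarrow> L \<subseteq> ?K \<Longrightarrow> L = ?M \<or> L = ?K" using g4 i by blast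
    have "card ?K = q * card ?M"
      using cyc_max_index[OF wc _ qj(1) _ M, of j] w(2) K(2) qj(2) MK Mne mx by simp
    then have cK: "card ?K = q * card (objs ! i)" using cj_card[OF gi subgroup.subset[OF Si]] by simp
    have "q dvd p ^ k" using dv[of "Suc i"] i cK by (metis dvd_mult_left dvd_trans Suc_leI)
    then have "q dvd p" using prime_dvd_power[OF qj(1)] by blast
    then have "q = p" using primes_dvd_imp_eq[OF qj(1) p] by blast
    then show ?thesis using cK by simp
  qed
  show ?thesis
  proof (intro allI impI)
    fix i assume "i \<le> n"
    then show "card (objs ! i) = card (objs ! 0) * p ^ i"
    proof (induction i)
      case 0 then show ?case by simp
    next
      case (Suc i)
      then show ?case using step[of i] by simp
    qed
  qed
qed

end

context group begin

lemma cj_comm: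
  assumes z: "z \<in> carrier G" and Y: "Y \<subseteq> generate G {z}" and u: "u \<in> generate G {z}"
  shows "cj G u Y = Y"
proof -
  have Zc: "generate G {z} \<subseteq> carrier G" using subgroup.subset[OF gen_sub[OF z]] .
  have uc: "u \<in> carrier G" using u Zc by blast
  have e: "u \<otimes> a \<otimes> inv u = a" if a: "a \<in> Y" for a
  proof -
    have aZ: "a \<in> generate G {z}" using a Y by blast
    have ac: "a \<in> carrier G" using aZ Zc by blast
    have "u \<otimes> a = a \<otimes> u" using gen_comm[OF z u aZ] .
    then show ?thesis using ac uc by (simp add: m_assoc)
  qed
  show ?thesis
  proof (rule equalityI)
    show "cj G u Y \<subseteq> Y"
    proof
      fix x assume "x \<in> cj G u Y"
      then obtain a where "a \<in> Y" "x = u \<otimes> a \<otimes> inv u" unfolding cj_def by blast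
      then show "x \<in> Y" using e by simp
    qed
    show "Y \<subseteq> cj G u Y"
    proof
      fix a assume a: "a \<in> Y"
      then have "a = u \<otimes> a \<otimes> inv u" using e by simp
      then show "a \<in> cj G u Y" unfolding cj_def using a by blast
    qed
  qed
qed

lemma ufp_if:
  assumes FS: "\<forall>Z\<in>F. subgroup Z G \<and> finite Z"
    and FC: "\<forall>Z\<in>F. \<forall>Y. subgroup Y G \<and> Y \<subseteq> Z \<longrightarrow> Y \<in> F"
    and HYP: "\<forall>H\<in>F. cyclic_group (G\<lparr>carrier := H\<rparr>) \<and> (\<exists>p k. Factorial_Ring.prime (p::nat) \<and> card H = p ^ k)"
  shows "orbit_category_ufp G F"
  unfolding orbit_category_ufp_def
proof (intro ballI allI impI)
  fix x y objs ms objs' ms'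
  assume xF: "x \<in> F" and yF: "y \<in> F"
    and A: "orb_chain G F x y objs ms \<and> orb_chain G F x y objs' ms' \<and> orb_chain_comp G x ms = orb_chain_comp G x ms'"
  have ch1: "orb_chain G F x y objs ms" and ch2: "orb_chain G F x y objs' ms'"
    and ceq: "orb_chain_comp G x ms = orb_chain_comp G x ms'" using A by auto
  define n where "n = length ms"
  define n' where "n' = length ms'"
  obtain gs where g1: "\<forall>i<n. gs i \<in> carrier G"
    and g2: "\<forall>i<n. cj G (gs i) (objs ! i) \<subseteq> objs ! Suc i"
    and g3: "\<forall>i<n. ms ! i = mkhom G (objs ! i) (objs ! Suc i) (gs i)"
    and g4: "\<forall>i<n. cj G (gs i) (objs ! i) \<noteq> objs ! Suc i \<and>
       (\<forall>L. subgroup L G \<longrightarrow> cj G (gs i) (objs ! i) \<subseteq> L \<longrightarrow> L \<subseteq> objs ! Suc i \<longrightarrow> L = cj G (gs i) (objs ! i) \<or> L = objs ! Suc i)"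
    and g5: "\<forall>i\<le>n. subgroup (objs ! i) G \<and> finite (objs ! i) \<and> objs ! i \<in> F"
    and g6: "orb_chain_comp G x ms = mkhom G x y (hp G gs n)"
    unfolding n_def by (rule chain_data[OF FS FC ch1])
  obtain gs' where g1': "\<forall>i<n'. gs' i \<in> carrier G"
    and g2': "\<forall>i<n'. cj G (gs' i) (objs' ! i) \<subseteq> objs' ! Suc i"
    and g3': "\<forall>i<n'. ms' ! i = mkhom G (objs' ! i) (objs' ! Suc i) (gs' i)"
    and g4': "\<forall>i<n'. cj G (gs' i) (objs' ! i) \<noteq> objs' ! Suc i \<and>
       (\<forall>L. subgroup L G \<longrightarrow> cj G (gs' i) (objs' ! i) \<subseteq> L \<longrightarrow> L \<subseteq> objs' ! Suc i \<longrightarrow> L = cj G (gs' i) (objs' ! i) \<or> L = objs' ! Suc i)"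
    and g5': "\<forall>i\<le>n'. subgroup (objs' ! i) G \<and> finite (objs' ! i) \<and> objs' ! i \<in> F"
    and g6': "orb_chain_comp G x ms' = mkhom G x y (hp G gs' n')"
    unfolding n'_def by (rule chain_data[OF FS FC ch2])
  have len: "length objs = Suc n" and o0: "objs ! 0 = x" and on: "objs ! n = y"
    using ch1 unfolding orb_chain_def n_def by auto
  have len': "length objs' = Suc n'" and o0': "objs' ! 0 = x" and on': "objs' ! n' = y"
    using ch2 unfolding orb_chain_def n'_def by auto
  have x: "subgroup x G" "finite x" and y: "subgroup y G" "finite y" using FS xF yF by auto
  obtain z where z: "z \<in> y" "y = generate G {z}" using cyc_gen[OF y(1)] HYP yF by blast
  have zc: "z \<in> carrier G" using subgroup.mem_carrier[OF y(1) z(1)] .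
  obtain p k where pk: "Factorial_Ring.prime p" "card y = p ^ k" using HYP yF by blast
  have p1: "p > 1" using pk(1) prime_gt_1_nat by blast
  have "card (objs ! n) = p ^ k" using on pk(2) by simp
  then have cards: "\<forall>i\<le>n. card (objs ! i) = card (objs ! 0) * p ^ i"
    by (rule chain_cards[OF HYP g1 g2 g4 g5 pk(1)])
  have "card (objs' ! n') = p ^ k" using on' pk(2) by simp
  then have cards': "\<forall>i\<le>n'. card (objs' ! i) = card (objs' ! 0) * p ^ i"
    by (rule chain_cards[OF HYP g1' g2' g4' g5' pk(1)])
  have cx: "card x > 0" using x subgroup.one_closed[OF x(1)] by (metis card_gt_0_iff empty_iff)
  have "card x * p ^ n = card x * p ^ n'" using cards[rule_format, of n] cards'[rule_format, of n'] on on' o0 o0' by simp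
  then have "p ^ n = p ^ n'" using cx by simp
  then have nn: "n = n'" using p1 by (simp add: power_inject_exp)
  have sg: "\<forall>i\<le>n. subgroup (objs ! i) G" using g5 by blast
  have sg': "\<forall>i\<le>n. subgroup (objs' ! i) G" using g5' nn by blast
  have g1n': "\<forall>i<n. gs' i \<in> carrier G" using g1' nn by simp
  have g2n': "\<forall>i<n. cj G (gs' i) (objs' ! i) \<subseteq> objs' ! Suc i" using g2' nn by simp
  have hpc_ok: "\<And>i. i \<le> n \<Longrightarrow> hp G gs i \<in> carrier G" using hp_closed g1 by auto
  have hpc_ok': "\<And>i. i \<le> n \<Longrightarrow> hp G gs' i \<in> carrier G" using hp_closed g1n' by auto
  have t0: "cj G (hp G gs n) x \<subseteq> y" using chain_tail[OF sg g1 g2, of 0 n] o0 on hpc_ok[of n] by simp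
  have t0': "cj G (hp G gs' n) x \<subseteq> y" using chain_tail[OF sg' g1n' g2n', of 0 n] o0' on' nn hpc_ok'[of n] by simp
  have "mkhom G x y (hp G gs n) = mkhom G x y (hp G gs' n)" using g6 g6' ceq nn by simp
  then have "hp G gs n \<otimes> inv (hp G gs' n) \<in> y"
    using mkhom_eq_iff[OF x(1) y(1) hpc_ok[of n] hpc_ok'[of n] t0 t0'] by simp
  then have "inv (hp G gs n \<otimes> inv (hp G gs' n)) \<in> y" using subgroup.m_inv_closed[OF y(1)] by blast
  moreover have "inv (hp G gs n \<otimes> inv (hp G gs' n)) = hp G gs' n \<otimes> inv (hp G gs n)"
    using hpc_ok[of n] hpc_ok'[of n] by (simp add: inv_mult_group)
  ultimately have uy: "hp G gs' n \<otimes> inv (hp G gs n) \<in> y" by simp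
  define u where "u = hp G gs' n \<otimes> inv (hp G gs n)"
  define c where "c i = hp G gs' i \<otimes> inv (hp G gs i)" for i
  have cc: "c i \<in> carrier G" if "i \<le> n" for i unfolding c_def using hpc_ok[OF that] hpc_ok'[OF that] by simp
  have key: "cj G (c i) (objs ! i) = objs' ! i" if i: "i \<le> n" for i
  proof -
    define b where "b = hp G gs n \<otimes> inv (hp G gs i)"
    define b' where "b' = hp G gs' n \<otimes> inv (hp G gs' i)"
    have bc: "b \<in> carrier G" unfolding b_def using hpc_ok[of n] hpc_ok[OF i] by simp
    have bc': "b' \<in> carrier G" unfolding b'_def using hpc_ok'[of n] hpc_ok'[OF i] by simp
    have uc: "u \<in> carrier G" unfolding u_def using hpc_ok[of n] hpc_ok'[of n] by simp
    have Si: "subgroup (objs ! i) G" "subgroup (objs' ! i) G" using sg sg' i by auto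
    have Sic: "objs ! i \<subseteq> carrier G" "objs' ! i \<subseteq> carrier G" using subgroup.subset Si by auto
    have Yi: "cj G b (objs ! i) \<subseteq> y" unfolding b_def using chain_tail[OF sg g1 g2 i le_refl] on by simp
    have Yi': "cj G b' (objs' ! i) \<subseteq> y" unfolding b'_def using chain_tail[OF sg' g1n' g2n' i le_refl] on' nn by simp
    have "card (cj G b (objs ! i)) = card (cj G b' (objs' ! i))"
      using cj_card[OF bc Sic(1)] cj_card[OF bc' Sic(2)] cards[rule_format, OF i] cards'[rule_format, of i] i nn o0 o0' by simp
    then have Yeq: "cj G b (objs ! i) = cj G b' (objs' ! i)"
      using cyc_sub_unique[OF zc _ cj_subgroup[OF Si(1) bc] _ cj_subgroup[OF Si(2) bc']] Yi Yi' z(2) y(2) by simp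
    have ce: "c i = inv b' \<otimes> u \<otimes> b"
      unfolding c_def b_def b'_def u_def using hpc_ok[of n] hpc_ok[OF i] hpc_ok'[of n] hpc_ok'[OF i]
      by (simp add: inv_mult_group m_assoc)
    have "cj G (c i) (objs ! i) = cj G (inv b') (cj G u (cj G b (objs ! i)))"
      unfolding ce using cj_mult[OF m_closed[OF inv_closed[OF bc'] uc] bc Sic(1)] cj_mult[OF inv_closed[OF bc'] uc] cj_carrier[OF bc Sic(1)]
      by simp
    also have "cj G u (cj G b (objs ! i)) = cj G b (objs ! i)"
      using cj_comm[OF zc] Yi uy z(2) unfolding u_def by simp
    also have "cj G (inv b') (cj G b (objs ! i)) = objs' ! i" using Yeq cj_inv[OF bc' Sic(2)] by simp
    finally show ?thesis .
  qed
  define hs where "hs = map (\<lambda>i. mkhom G (objs ! i) (objs' ! i) (c i)) [0..<Suc n]"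
  have hsi: "hs ! i = mkhom G (objs ! i) (objs' ! i) (c i)" if "i \<le> n" for i
    unfolding hs_def using that by (simp del: upt_Suc)
  have "length hs = length objs" unfolding hs_def using len by simp
  moreover have "hs ! 0 = orb_id G x"
  proof -
    have "c 0 = \<one>" unfolding c_def by simp
    then show ?thesis using hsi[of 0] o0 o0' orb_id_mkhom(1)[OF x(1)] by simp
  qed
  moreover have "hs ! n = orb_id G y"
  proof -
    have cn: "c n = u" unfolding c_def u_def ..
    have "cj G u y \<subseteq> y" using cj_self[OF y(1) uy[folded u_def]] by simp
    then have "mkhom G y y u = mkhom G y y \<one>"
      using mkhom_eq_iff[OF y(1) y(1) _ one_closed _ orb_id_mkhom(2)[OF y(1)]] uy[folded u_def] subgroup.mem_carrier[OF y(1)] by simp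
    then show ?thesis using hsi[of n] cn on on' nn orb_id_mkhom(1)[OF y(1)] by simp
  qed
  moreover have "\<forall>i\<le>n. orb_iso G (objs ! i) (objs' ! i) (hs ! i)"
    using hsi key mkhom_iso sg sg' cc by simp
  moreover have "\<forall>i<n. orb_comp G (objs ! i) (ms' ! i) (hs ! i) = orb_comp G (objs ! i) (hs ! Suc i) (ms ! i)"
  proof (intro allI impI)
    fix i assume i: "i < n"
    have il: "i \<le> n" "Suc i \<le> n" using i by auto
    have S: "subgroup (objs ! i) G" "subgroup (objs' ! i) G" "subgroup (objs ! Suc i) G" "subgroup (objs' ! Suc i) G"
      using sg sg' il by auto
    have k1: "cj G (c i) (objs ! i) \<subseteq> objs' ! i" using key[OF il(1)] by simp
    have k2: "cj G (c (Suc i)) (objs ! Suc i) \<subseteq> objs' ! Suc i" using key[OF il(2)] by simp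
    have gi: "gs i \<in> carrier G" "gs' i \<in> carrier G" using g1 g1n' i by auto
    have L: "orb_comp G (objs ! i) (ms' ! i) (hs ! i) = mkhom G (objs ! i) (objs' ! Suc i) (gs' i \<otimes> c i)"
      using mkhom_comp[OF S(1) S(2) S(4) cc[OF il(1)] gi(2) k1] g2n' g3' hsi[OF il(1)] i nn by simp
    have R: "orb_comp G (objs ! i) (hs ! Suc i) (ms ! i) = mkhom G (objs ! i) (objs' ! Suc i) (c (Suc i) \<otimes> gs i)"
      using mkhom_comp[OF S(1) S(3) S(4) gi(1) cc[OF il(2)] _ k2] g2 g3 hsi[OF il(2)] i by simp
    have "gs' i \<otimes> c i = c (Suc i) \<otimes> gs i"
      unfolding c_def using gi hpc_ok[OF il(1)] hpc_ok'[OF il(1)] by (simp add: inv_mult_group m_assoc)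
    then show "orb_comp G (objs ! i) (ms' ! i) (hs ! i) = orb_comp G (objs ! i) (hs ! Suc i) (ms ! i)"
      using L R by simp
  qed
  ultimately show "length ms = length ms' \<and>
       (\<exists>hs. length hs = length objs \<and> hs ! 0 = orb_id G x \<and> hs ! length ms = orb_id G y \<and>
             (\<forall>i\<le>length ms. orb_iso G (objs ! i) (objs' ! i) (hs ! i)) \<and>
             (\<forall>i<length ms. orb_comp G (objs ! i) (ms' ! i) (hs ! i) = orb_comp G (objs ! i) (hs ! Suc i) (ms ! i)))"
    using nn unfolding n_def n'_def by blast
qed

end

lemma hp_one: "hp G (\<lambda>_. \<one>\<^bsub>G\<^esub>) m = \<one>\<^bsub>G\<^esub>" if "group G"
  using that by (induction m) (auto simp: group.is_monoid monoid.l_one)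

context group begin

lemma hom_fix_sub:
  assumes H: "subgroup H G" and K: "subgroup K G" and f: "orb_hom G H K f" and fH: "f H = K"
  shows "H \<subseteq> K"
proof -
  obtain c where c: "c \<in> carrier G" "cj G c H \<subseteq> K" "f = mkhom G H K c" using hom_rep[OF H K f] .
  have "f (\<one> <# H) = (\<one> \<otimes> inv c) <# K" using mkhom_apply[OF H K c(1) c(2) one_closed] c(3) by simp
  then have "inv c <# K = \<one> <# K" using fH one_lcos[OF H] one_lcos[OF K] c(1) by simp
  then have "inv (inv c) \<otimes> \<one> \<in> K" using lcos_eq_iff[OF K inv_closed[OF c(1)] one_closed] by simp
  then have "c \<in> K" using c(1) by simp
  then have cK: "inv c \<in> K" using subgroup.m_inv_closed[OF K] by blast
  have "H = cj G (inv c) (cj G c H)" using cj_inv[OF c(1) subgroup.subset[OF H]] by simp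
  also have "\<dots> \<subseteq> cj G (inv c) K" using cj_mono[OF c(2)] .
  also have "\<dots> = K" using cj_self[OF K cK] .
  finally show ?thesis .
qed

lemma iso_fix:
  assumes H: "subgroup H G" and K: "subgroup K G" and f: "orb_iso G H K f" and fH: "f H = K"
  shows "H = K"
proof -
  obtain f' where f1: "orb_hom G H K f" and f2: "orb_hom G K H f'" and e: "orb_comp G H f' f = orb_id G H"
    using f unfolding orb_iso_def by blast
  have "orb_comp G H f' f H = f' (f H)" unfolding orb_comp_def compose_def using self_in_coset_space[OF H] by simp
  moreover have "orb_id G H H = H" unfolding orb_id_def using self_in_coset_space[OF H] by simp
  ultimately have "f' K = H" using e fH by simp
  then show ?thesis using hom_fix_sub[OF H K f1 fH] hom_fix_sub[OF K H f2] by blast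
qed

lemma mkhom_one_self:
  assumes H: "subgroup H G" and K: "subgroup K G" and HK: "H \<subseteq> K"
  shows "mkhom G H K \<one> H = K"
proof -
  have c1: "cj G \<one> H \<subseteq> K" using cj_one[OF subgroup.subset[OF H]] HK by simp
  show ?thesis using mkhom_apply[OF H K one_closed c1 one_closed] one_lcos[OF H] one_lcos[OF K] by simp
qed

end

context group begin
lemma incl_chain:
  assumes FS: "\<forall>Z\<in>F. subgroup Z G \<and> finite Z"
    and len: "length objs = Suc m" and inF: "\<forall>i\<le>m. objs ! i \<in> F"
    and mx: "\<forall>i<m. maxsub G (objs ! i) (objs ! Suc i)"
    and ms: "ms = map (\<lambda>i. mkhom G (objs ! i) (objs ! Suc i) \<one>) [0..<m]"
  shows "orb_chain G F (objs ! 0) (objs ! m) objs ms"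
    and "orb_chain_comp G (objs ! 0) ms = mkhom G (objs ! 0) (objs ! m) \<one>"
proof -
  have lm: "length ms = m" using ms by simp
  have msi: "ms ! i = mkhom G (objs ! i) (objs ! Suc i) \<one>" if "i < m" for i using ms that by simp
  have sF: "set objs \<subseteq> F"
  proof
    fix Xo assume "Xo \<in> set objs"
    then obtain i where "i < length objs" "Xo = objs ! i" by (metis in_set_conv_nth)
    then show "Xo \<in> F" using inF len by simp
  qed
  show "orb_chain G F (objs ! 0) (objs ! m) objs ms"
    unfolding orb_chain_def
  proof (intro conjI)
    show "length objs = Suc (length ms)" using len lm by simp
    show "objs ! 0 = objs ! 0" ..
    show "objs ! length ms = objs ! m" using lm by simp
    show "set objs \<subseteq> F" using sF .
    show "\<forall>i<length ms. orb_unfactorisable G F (objs ! i) (objs ! Suc i) (ms ! i)"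
    proof (intro allI impI)
      fix i assume "i < length ms"
      then have i: "i < m" using lm by simp
      have F1: "objs ! i \<in> F" "objs ! Suc i \<in> F" using inF i by auto
      have "maxsub G (objs ! i) (objs ! Suc i)" using mx i by blast
      then have "orb_unfactorisable G F (objs ! i) (objs ! Suc i) (mkhom G (objs ! i) (objs ! Suc i) \<one>)"
        by (rule incl_unfact[OF FS F1])
      then show "orb_unfactorisable G F (objs ! i) (objs ! Suc i) (ms ! i)" using msi[OF i] by simp
    qed
  qed
  have sg: "\<forall>i\<le>m. subgroup (objs ! i) G" using inF FS by blast
  have g2: "\<forall>i<m. cj G \<one> (objs ! i) \<subseteq> objs ! Suc i"
  proof (intro allI impI)
    fix i assume i: "i < m"
    have s: "subgroup (objs ! i) G" using sg i by simp
    have "maxsub G (objs ! i) (objs ! Suc i)" using mx i by blast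
    then have "objs ! i \<subseteq> objs ! Suc i" unfolding maxsub_def by blast
    then show "cj G \<one> (objs ! i) \<subseteq> objs ! Suc i" using cj_one[OF subgroup.subset[OF s]] by simp
  qed
  have "orb_chain_comp G (objs ! 0) ms = mkhom G (objs ! 0) (objs ! m) (hp G (\<lambda>_. \<one>) m)"
  proof (rule chain_comp[OF len lm sg _ g2])
    show "\<forall>i<m. \<one> \<in> carrier G" by simp
    show "\<forall>i<m. ms ! i = mkhom G (objs ! i) (objs ! Suc i) \<one>" using msi by blast
  qed
  then show "orb_chain_comp G (objs ! 0) ms = mkhom G (objs ! 0) (objs ! m) \<one>"
    using hp_one[OF is_group] by simp
qed

end

context group begin
lemma chain_to_max:
  assumes FS: "\<forall>Z\<in>F. subgroup Z G \<and> finite Z"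
    and FC: "\<forall>Z\<in>F. \<forall>Y. subgroup Y G \<and> Y \<subseteq> Z \<longrightarrow> Y \<in> F"
    and KF: "K \<in> F" and M: "maxsub G M K"
  shows "\<exists>m objs. length objs = Suc (Suc m) \<and> objs ! 0 = {\<one>} \<and> objs ! Suc m = K \<and> objs ! m = M \<and>
     (\<forall>i\<le>Suc m. objs ! i \<in> F) \<and> (\<forall>i<Suc m. maxsub G (objs ! i) (objs ! Suc i))"
proof -
  have K: "subgroup K G" "finite K" using FS KF by auto
  have Ms: "subgroup M G" "M \<subseteq> K" using M unfolding maxsub_def by auto
  have fM: "finite M" using finite_subset[OF Ms(2) K(2)] .
  obtain m objs where o: "length objs = Suc m" "objs ! 0 = {\<one>}" "objs ! m = M"
      "\<forall>i\<le>m. subgroup (objs ! i) G \<and> objs ! i \<subseteq> M" "\<forall>i<m. maxsub G (objs ! i) (objs ! Suc i)"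
    using max_chain[OF Ms(1) fM] by blast
  define Ol where "Ol = objs @ [K]"
  have n1: "Ol ! i = objs ! i" if "i \<le> m" for i using that o(1) unfolding Ol_def by (simp add: nth_append)
  have n2: "Ol ! Suc m = K" using o(1) unfolding Ol_def by (simp add: nth_append)
  have "length Ol = Suc (Suc m)" using o(1) unfolding Ol_def by simp
  moreover have "Ol ! 0 = {\<one>}" using n1[of 0] o(2) by simp
  moreover have "Ol ! m = M" using n1[of m] o(3) by simp
  moreover have "\<forall>i\<le>Suc m. Ol ! i \<in> F"
  proof (intro allI impI)
    fix i assume i: "i \<le> Suc m"
    show "Ol ! i \<in> F"
    proof (cases "i = Suc m")
      case True then show ?thesis using n2 KF by simp
    next
      case False then have il: "i \<le> m" using i by simp
      then have "subgroup (objs ! i) G \<and> objs ! i \<subseteq> K" using o(4) Ms(2) by auto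
      then have "objs ! i \<in> F" using FC KF by blast
      then show ?thesis using n1[OF il] by simp
    qed
  qed
  moreover have "\<forall>i<Suc m. maxsub G (Ol ! i) (Ol ! Suc i)"
  proof (intro allI impI)
    fix i assume i: "i < Suc m"
    show "maxsub G (Ol ! i) (Ol ! Suc i)"
    proof (cases "i = m")
      case True then show ?thesis using n1[of m] n2 o(3) M by simp
    next
      case False then have "i < m" using i by simp
      then show ?thesis using n1[of i] n1[of "Suc i"] o(5) by simp
    qed
  qed
  ultimately show ?thesis using n2 by blast
qed

end

context group begin

lemma ufp_onlyif:
  assumes FS: "\<forall>Z\<in>F. subgroup Z G \<and> finite Z"
    and FC: "\<forall>Z\<in>F. \<forall>Y. subgroup Y G \<and> Y \<subseteq> Z \<longrightarrow> Y \<in> F"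
    and U: "orbit_category_ufp G F" and KF: "K \<in> F"
  shows "cyclic_group (G\<lparr>carrier := K\<rparr>) \<and> (\<exists>p k. Factorial_Ring.prime (p::nat) \<and> card K = p ^ k)"
proof (rule ccontr)
  assume nc: "\<not> ?thesis"
  have K: "subgroup K G" "finite K" using FS KF by auto
  obtain M1 M2 where M: "maxsub G M1 K" "maxsub G M2 K" "M1 \<noteq> M2" using two_max[OF K nc] by blast
  obtain m1 O1 where o1: "length O1 = Suc (Suc m1)" "O1 ! 0 = {\<one>}" "O1 ! Suc m1 = K" "O1 ! m1 = M1"
     "\<forall>i\<le>Suc m1. O1 ! i \<in> F" "\<forall>i<Suc m1. maxsub G (O1 ! i) (O1 ! Suc i)"
    using chain_to_max[OF FS FC KF M(1)] by blast
  obtain m2 O2 where o2: "length O2 = Suc (Suc m2)" "O2 ! 0 = {\<one>}" "O2 ! Suc m2 = K" "O2 ! m2 = M2"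
     "\<forall>i\<le>Suc m2. O2 ! i \<in> F" "\<forall>i<Suc m2. maxsub G (O2 ! i) (O2 ! Suc i)"
    using chain_to_max[OF FS FC KF M(2)] by blast
  define ms1 where "ms1 = map (\<lambda>i. mkhom G (O1 ! i) (O1 ! Suc i) \<one>) [0..<Suc m1]"
  define ms2 where "ms2 = map (\<lambda>i. mkhom G (O2 ! i) (O2 ! Suc i) \<one>) [0..<Suc m2]"
  have ch1: "orb_chain G F {\<one>} K O1 ms1" and c1: "orb_chain_comp G {\<one>} ms1 = mkhom G {\<one>} K \<one>"
    using incl_chain[OF FS o1(1) o1(5) o1(6) ms1_def] o1(2,3) by simp_all
  have ch2: "orb_chain G F {\<one>} K O2 ms2" and c2: "orb_chain_comp G {\<one>} ms2 = mkhom G {\<one>} K \<one>"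
    using incl_chain[OF FS o2(1) o2(5) o2(6) ms2_def] o2(2,3) by simp_all
  have oneF: "{\<one>} \<in> F" using o1(5)[rule_format, of 0] o1(2) by simp
  have U': "\<forall>x\<in>F. \<forall>y\<in>F. \<forall>objs ms objs' ms'.
        orb_chain G F x y objs ms \<and> orb_chain G F x y objs' ms' \<and>
        orb_chain_comp G x ms = orb_chain_comp G x ms' \<longrightarrow>
        length ms = length ms' \<and>
        (\<exists>hs. length hs = length objs \<and>
              hs ! 0 = orb_id G x \<and> hs ! length ms = orb_id G y \<and>
              (\<forall>i\<le>length ms. orb_iso G (objs ! i) (objs' ! i) (hs ! i)) \<and>
              (\<forall>i<length ms. orb_comp G (objs ! i) (ms' ! i) (hs ! i) =
                             orb_comp G (objs ! i) (hs ! Suc i) (ms ! i)))"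
    using U unfolding orbit_category_ufp_def .
  have ceq: "orb_chain_comp G {\<one>} ms1 = orb_chain_comp G {\<one>} ms2" using c1 c2 by simp
  have R: "length ms1 = length ms2 \<and>
        (\<exists>hs. length hs = length O1 \<and>
              hs ! 0 = orb_id G {\<one>} \<and> hs ! length ms1 = orb_id G K \<and>
              (\<forall>i\<le>length ms1. orb_iso G (O1 ! i) (O2 ! i) (hs ! i)) \<and>
              (\<forall>i<length ms1. orb_comp G (O1 ! i) (ms2 ! i) (hs ! i) =
                             orb_comp G (O1 ! i) (hs ! Suc i) (ms1 ! i)))"
    using U'[rule_format, OF oneF KF conjI[OF ch1 conjI[OF ch2 ceq]]] .
  have l1: "length ms1 = Suc m1" and l2: "length ms2 = Suc m2" unfolding ms1_def ms2_def by simp_all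
  have mm: "m1 = m2" using R l1 l2 by simp
  obtain hs where H: "length hs = length O1 \<and>
              hs ! 0 = orb_id G {\<one>} \<and> hs ! length ms1 = orb_id G K \<and>
              (\<forall>i\<le>length ms1. orb_iso G (O1 ! i) (O2 ! i) (hs ! i)) \<and>
              (\<forall>i<length ms1. orb_comp G (O1 ! i) (ms2 ! i) (hs ! i) =
                             orb_comp G (O1 ! i) (hs ! Suc i) (ms1 ! i))"
    by (rule exE[OF conjunct2[OF R]])
  have h0: "hs ! 0 = orb_id G {\<one>}" using conjunct1[OF conjunct2[OF H]] .
  have hiso': "\<forall>i\<le>length ms1. orb_iso G (O1 ! i) (O2 ! i) (hs ! i)"
    using conjunct1[OF conjunct2[OF conjunct2[OF conjunct2[OF H]]]] .
  have hcomm': "\<forall>i<length ms1. orb_comp G (O1 ! i) (ms2 ! i) (hs ! i) = orb_comp G (O1 ! i) (hs ! Suc i) (ms1 ! i)"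
    using conjunct2[OF conjunct2[OF conjunct2[OF conjunct2[OF H]]]] .
  have hiso: "\<forall>i\<le>Suc m1. orb_iso G (O1 ! i) (O2 ! i) (hs ! i)" using hiso' l1 by simp
  have hcomm: "\<forall>i<Suc m1. orb_comp G (O1 ! i) (ms2 ! i) (hs ! i) = orb_comp G (O1 ! i) (hs ! Suc i) (ms1 ! i)"
    using hcomm' l1 by simp
  have S1: "subgroup (O1 ! i) G" if i: "i \<le> Suc m1" for i
  proof -
    have "O1 ! i \<in> F" using o1(5) i by simp
    then show ?thesis using FS by blast
  qed
  have S2: "subgroup (O2 ! i) G" if i: "i \<le> Suc m1" for i
  proof -
    have "O2 ! i \<in> F" using o2(5) i mm by simp
    then show ?thesis using FS by blast
  qed
  have fix_all: "(hs ! i) (O1 ! i) = O2 ! i" if "i \<le> Suc m1" for i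
    using that
  proof (induction i)
    case 0
    have "orb_id G {\<one>} {\<one>} = {\<one>}" unfolding orb_id_def using self_in_coset_space[OF triv_subgroup] by simp
    then show ?case using h0 o1(2) o2(2) by simp
  next
    case (Suc i)
    have i: "i < Suc m1" using Suc.prems by simp
    have IH: "(hs ! i) (O1 ! i) = O2 ! i" using Suc.IH i by simp
    have s: "subgroup (O1 ! i) G" "subgroup (O2 ! i) G" "subgroup (O1 ! Suc i) G" "subgroup (O2 ! Suc i) G"
      using S1 S2 i by auto
    have sub1: "O1 ! i \<subseteq> O1 ! Suc i" using o1(6) i unfolding maxsub_def by blast
    have sub2: "O2 ! i \<subseteq> O2 ! Suc i" using o2(6) i mm unfolding maxsub_def by blast
    have m1i: "ms1 ! i = mkhom G (O1 ! i) (O1 ! Suc i) \<one>" unfolding ms1_def using i by (simp del: upt_Suc)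
    have m2i: "ms2 ! i = mkhom G (O2 ! i) (O2 ! Suc i) \<one>" unfolding ms2_def using i mm by (simp del: upt_Suc)
    have inC: "O1 ! i \<in> coset_space G (O1 ! i)" using self_in_coset_space[OF s(1)] .
    have "orb_comp G (O1 ! i) (ms2 ! i) (hs ! i) (O1 ! i) = (ms2 ! i) ((hs ! i) (O1 ! i))"
      unfolding orb_comp_def compose_def using inC by simp
    also have "\<dots> = O2 ! Suc i" using IH m2i mkhom_one_self[OF s(2) s(4) sub2] by simp
    finally have L: "orb_comp G (O1 ! i) (ms2 ! i) (hs ! i) (O1 ! i) = O2 ! Suc i" .
    have "orb_comp G (O1 ! i) (hs ! Suc i) (ms1 ! i) (O1 ! i) = (hs ! Suc i) ((ms1 ! i) (O1 ! i))"
      unfolding orb_comp_def compose_def using inC by simp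
    also have "\<dots> = (hs ! Suc i) (O1 ! Suc i)" using m1i mkhom_one_self[OF s(1) s(3) sub1] by simp
    finally have R: "orb_comp G (O1 ! i) (hs ! Suc i) (ms1 ! i) (O1 ! i) = (hs ! Suc i) (O1 ! Suc i)" .
    have "orb_comp G (O1 ! i) (ms2 ! i) (hs ! i) = orb_comp G (O1 ! i) (hs ! Suc i) (ms1 ! i)"
      using hcomm i by blast
    then show ?case using L R by simp
  qed
  have "(hs ! m1) (O1 ! m1) = O2 ! m1" using fix_all[of m1] by simp
  moreover have "orb_iso G (O1 ! m1) (O2 ! m1) (hs ! m1)" using hiso by simp
  ultimately have "O1 ! m1 = O2 ! m1" using iso_fix[OF S1[of m1] S2[of m1]] by simp
  then show False using o1(4) o2(4) mm M(3) by simp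
qed

end

theorem proposition6p33:
  fixes G :: "('g, 'b) monoid_scheme" and F :: "'g set set"
  assumes "group G"
    and "subgroup_family G F"
    and "\<forall>H\<in>F. finite H"
  shows "orbit_category_ufp G F \<longleftrightarrow>
         (\<forall>H\<in>F. cyclic_group (G\<lparr>carrier := H\<rparr>) \<and>
                 (\<exists>p k. Factorial_Ring.prime (p::nat) \<and> card H = p ^ k))"
proof -
  interpret group G using assms(1) .
  have FS: "\<forall>Z\<in>F. subgroup Z G \<and> finite Z" using assms(2,3) unfolding subgroup_family_def by blast
  have FC: "\<forall>Z\<in>F. \<forall>Y. subgroup Y G \<and> Y \<subseteq> Z \<longrightarrow> Y \<in> F" using assms(2) unfolding subgroup_family_def by blast
  show ?thesis
  proof
    assume U: "orbit_category_ufp G F"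
    show "\<forall>H\<in>F. cyclic_group (G\<lparr>carrier := H\<rparr>) \<and> (\<exists>p k. Factorial_Ring.prime (p::nat) \<and> card H = p ^ k)"
      using ufp_onlyif[OF FS FC U] by blast
  next
    assume HYP: "\<forall>H\<in>F. cyclic_group (G\<lparr>carrier := H\<rparr>) \<and> (\<exists>p k. Factorial_Ring.prime (p::nat) \<and> card H = p ^ k)"
    show "orbit_category_ufp G F" using ufp_if[OF FS FC HYP] .
  qed
qed

end
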